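(* Let $(\Omega,\mathcal F,\mathbb P)$ be a complete probability space, $d\ge1$, $\beta\in(0,1)$, and let $\{\mathcal F(\tilde s)\}_{\tilde s\in\mathbb N_0^d}$ satisfy (F1) and (F2). For each $i=1,\dots,d$ let $\{h_i'(t)\}_{t\in\mathbb N}$ be positive, decreasing, bounded and $\mathbf F_i$-predictable. Then for every $\tilde s\in\mathbb N_0^d$, $$\Phi'(\tilde s)=\mathbb E\Big[\int_0^\infty\big(1-\beta^{\tau(m;\tilde s)}\big)\,\mathrm dm\,\Big|\,\mathcal F(\tilde s)\Big]=(1-\beta)\,\mathbb E\Big[\sum_{t=0}^\infty\beta^tN(t;\tilde s)\,\Big|\,\mathcal F(\tilde s)\Big]\quad\text{a.s.}$$ Moreover, the essential supremum defining $\Phi'(\tilde s)$ is attained by an allocation strategy $\tilde T\in\mathcal A(\tilde s)$ if and only if $\tilde T$ satisfies the synchronization identity $$\sum_{i=1}^d\big[(T_i(t)-s_i)\wedge(\sigma_i(s_i;m)-s_i)\big]=t\wedge\tau(m;\tilde s)\qquad\forall\,t\in\mathbb N_0,\ m>0.$$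
   Context: (F1): $\mathcal F(\tilde s)\subseteq\mathcal F(\tilde r)$ for $\tilde s\le\tilde r$ (componentwise); (F2): $\mathcal F(\tilde 0)$ contains all null sets. $\tilde e_i$ is the $i$th unit vector, $\mathcal F_i(t):=\mathcal F(t\tilde e_i)$, $\mathbf F_i=\{\mathcal F_i(t)\}_{t\in\mathbb N_0}$; predictable means $h_i'(t)$ is $\mathcal F_i(t-1)$-measurable. For each $i$ (with $\beta^\infty:=0$ and $\mathcal S_i(t)$ the $\mathbf F_i$-stopping times valued in $\{t,t+1,\dots\}\cup\{\infty\}$): $V_i(t;m):=\operatorname{ess\,sup}_{\tau\in\mathcal S_i(t)}\mathbb E[\sum_{u=t}^{\tau-1}\beta^{u-t}h_i'(u+1)+m\beta^{\tau-t}\mid\mathcal F_i(t)]$, $m\ge0$; $\sigma_i(t;m):=\inf\{\theta\ge t:V_i(\theta;m)=m\}$ ($\inf\emptyset=\infty$). Further $\tau(m;\tilde s):=\sum_{i=1}^d(\sigma_i(s_i;m)-s_i)$ and $N(t;\tilde s):=\inf\{m\ge0:\tau(m;\tilde s)\le t\}$. Allocation strategy for $\tilde s$: $\mathbb N_0^d$-valued $\{\tilde T(t)\}_{t\in\mathbb N_0}$ with $\tilde T(0)=\tilde s$, $\tilde T(t+1)=\tilde T(t)+\tilde e_j$ for some $j$, and $\{\tilde T(t+1)=\tilde T(t)+\tilde e_j,\tilde T(t)=\tilde r\}\in\mathcal F(\tilde r)$ for all $j,\tilde r$; $\mathcal A(\tilde s)$ is the set of them. $\mathcal R'(\tilde T):=\sum_{i=1}^d\sum_{t=0}^\infty\beta^th_i'(T_i(t+1))(T_i(t+1)-T_i(t))$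 and $\Phi'(\tilde s):=\operatorname{ess\,sup}_{\tilde T\in\mathcal A(\tilde s)}\mathbb E[\mathcal R'(\tilde T)\mid\mathcal F(\tilde s)]$. *)

theory Defs
  imports "HOL-Probability.Probability"
begin

text \<open>Multi-indices in N_0^d are functions 'i => nat over a finite index type 'i
  (d = CARD('i) >= 1); the order on them is the componentwise order on functions.\<close>

definition unitv :: "'i \<Rightarrow> ('i \<Rightarrow> nat)" where
  "unitv i = (\<lambda>k. if k = i then 1 else 0)"

definition tvec :: "nat \<Rightarrow> 'i \<Rightarrow> ('i \<Rightarrow> nat)" where
  "tvec t i = (\<lambda>k. if k = i then t else 0)"

definition epow :: "real \<Rightarrow> enat \<Rightarrow> real" where
  "epow b x = (case x of enat n \<Rightarrow> b ^ n | \<infinity> \<Rightarrow> 0)"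

definition is_ess_sup :: "'a measure \<Rightarrow> ('a \<Rightarrow> real) set \<Rightarrow> ('a \<Rightarrow> real) \<Rightarrow> bool" where
  "is_ess_sup M XS Y \<longleftrightarrow>
     Y \<in> borel_measurable M \<and>
     (\<forall>X\<in>XS. AE \<omega> in M. X \<omega> \<le> Y \<omega>) \<and>
     (\<forall>Z\<in>borel_measurable M. (\<forall>X\<in>XS. AE \<omega> in M. X \<omega> \<le> Z \<omega>) \<longrightarrow> (AE \<omega> in M. Y \<omega> \<le> Z \<omega>))"

definition stop_times :: "'a measure \<Rightarrow> (('i \<Rightarrow> nat) \<Rightarrow> 'a measure) \<Rightarrow> 'i \<Rightarrow> nat \<Rightarrow> ('a \<Rightarrow> enat) set" where
  "stop_times M F i t = {\<tau>. (\<forall>\<omega>\<in>space M. enat t \<le> \<tau> \<omega>) \<and>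
       (\<forall>u. {\<omega>\<in>space M. \<tau> \<omega> \<le> enat u} \<in> sets (F (tvec u i)))}"

definition payoff :: "real \<Rightarrow> ('i \<Rightarrow> nat \<Rightarrow> 'a \<Rightarrow> real) \<Rightarrow> 'i \<Rightarrow> nat \<Rightarrow> real \<Rightarrow> ('a \<Rightarrow> enat) \<Rightarrow> 'a \<Rightarrow> real" where
  "payoff \<beta> h i t m \<tau> \<omega> =
     (\<Sum>u. if t \<le> u \<and> enat u < \<tau> \<omega> then \<beta> ^ (u - t) * h i (u + 1) \<omega> else 0)
     + m * epow \<beta> (\<tau> \<omega> - enat t)"

definition sigma_idx :: "('i \<Rightarrow> nat \<Rightarrow> real \<Rightarrow> 'a \<Rightarrow> real) \<Rightarrow> 'i \<Rightarrow> nat \<Rightarrow> real \<Rightarrow> 'a \<Rightarrow> enat" where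
  "sigma_idx V i t m \<omega> =
     (if \<exists>\<theta>\<ge>t. V i \<theta> m \<omega> = m then enat (LEAST \<theta>. t \<le> \<theta> \<and> V i \<theta> m \<omega> = m) else \<infinity>)"

definition tau_tot :: "('i::finite \<Rightarrow> nat \<Rightarrow> real \<Rightarrow> 'a \<Rightarrow> real) \<Rightarrow> real \<Rightarrow> ('i \<Rightarrow> nat) \<Rightarrow> 'a \<Rightarrow> enat" where
  "tau_tot V m s \<omega> = (\<Sum>i\<in>UNIV. sigma_idx V i (s i) m \<omega> - enat (s i))"

definition N_idx :: "('i::finite \<Rightarrow> nat \<Rightarrow> real \<Rightarrow> 'a \<Rightarrow> real) \<Rightarrow> nat \<Rightarrow> ('i \<Rightarrow> nat) \<Rightarrow> 'a \<Rightarrow> real" where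
  "N_idx V t s \<omega> = Inf {m. 0 \<le> m \<and> tau_tot V m s \<omega> \<le> enat t}"

definition alloc :: "'a measure \<Rightarrow> (('i \<Rightarrow> nat) \<Rightarrow> 'a measure) \<Rightarrow> ('i \<Rightarrow> nat) \<Rightarrow> (nat \<Rightarrow> 'a \<Rightarrow> ('i \<Rightarrow> nat)) set" where
  "alloc M F s = {T. (\<forall>\<omega>\<in>space M. T 0 \<omega> = s) \<and>
      (\<forall>t. \<forall>\<omega>\<in>space M. \<exists>j. T (Suc t) \<omega> = (\<lambda>k. T t \<omega> k + unitv j k)) \<and>
      (\<forall>t j r. {\<omega>\<in>space M. T (Suc t) \<omega> = (\<lambda>k. T t \<omega> k + unitv j k) \<and> T t \<omega> = r} \<in> sets (F r))}"

definition reward :: "real \<Rightarrow> ('i::finite \<Rightarrow> nat \<Rightarrow> 'a \<Rightarrow> real) \<Rightarrow> (nat \<Rightarrow> 'a \<Rightarrow> ('i \<Rightarrow> nat)) \<Rightarrow> 'a \<Rightarrow> real" where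
  "reward \<beta> h T \<omega> = (\<Sum>i\<in>UNIV. \<Sum>t. \<beta> ^ t * h i (T (Suc t) \<omega> i) \<omega> * real (T (Suc t) \<omega> i - T t \<omega> i))"

end

theory Submission
  imports Defs
begin

definition Va :: "real \<Rightarrow> ('i \<Rightarrow> nat \<Rightarrow> real) \<Rightarrow> 'i \<Rightarrow> nat \<Rightarrow> real \<Rightarrow> unit \<Rightarrow> real" where
  "Va \<beta> a i \<theta> m u = (if a i (Suc \<theta>) \<le> (1-\<beta>)*m then m else m+1)"

definition cnt :: "real \<Rightarrow> ('i \<Rightarrow> nat \<Rightarrow> real) \<Rightarrow> ('i \<Rightarrow> nat) \<Rightarrow> 'i \<Rightarrow> real \<Rightarrow> enat" where
  "cnt \<beta> a s i m = sigma_idx (Va \<beta> a) i (s i) m () - enat (s i)"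

definition Kt :: "real \<Rightarrow> ('i::finite \<Rightarrow> nat \<Rightarrow> real) \<Rightarrow> ('i \<Rightarrow> nat) \<Rightarrow> real \<Rightarrow> enat" where
  "Kt \<beta> a s m = tau_tot (Va \<beta> a) m s ()"

lemma Kt_eq: "Kt \<beta> a s m = (\<Sum>i\<in>UNIV. cnt \<beta> a s i m)"
  unfolding Kt_def tau_tot_def cnt_def by simp

definition ispath :: "('i \<Rightarrow> nat) \<Rightarrow> (nat \<Rightarrow> 'i \<Rightarrow> nat) \<Rightarrow> bool" where
  "ispath s p \<longleftrightarrow> p 0 = s \<and> (\<forall>t. \<exists>j. p (Suc t) = (\<lambda>k. p t k + unitv j k))"

definition Jp :: "(nat \<Rightarrow> 'i \<Rightarrow> nat) \<Rightarrow> nat \<Rightarrow> 'i" where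
  "Jp p t = (SOME j. p (Suc t) = (\<lambda>k. p t k + unitv j k))"

definition yv :: "('i \<Rightarrow> nat \<Rightarrow> real) \<Rightarrow> (nat \<Rightarrow> 'i \<Rightarrow> nat) \<Rightarrow> nat \<Rightarrow> real" where
  "yv a p t = a (Jp p t) (p (Suc t) (Jp p t))"

definition rew :: "real \<Rightarrow> ('i::finite \<Rightarrow> nat \<Rightarrow> real) \<Rightarrow> (nat \<Rightarrow> 'i \<Rightarrow> nat) \<Rightarrow> real" where
  "rew \<beta> a p = (\<Sum>i\<in>UNIV. \<Sum>t. \<beta> ^ t * a i (p (Suc t) i) * real (p (Suc t) i - p t i))"

definition Pc :: "real \<Rightarrow> ('i \<Rightarrow> nat \<Rightarrow> real) \<Rightarrow> (nat \<Rightarrow> 'i \<Rightarrow> nat) \<Rightarrow> real \<Rightarrow> nat \<Rightarrow> nat" where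
  "Pc \<beta> a p m t = (\<Sum>u<t. if (1-\<beta>)*m < yv a p u then 1 else 0)"

definition Qc :: "real \<Rightarrow> ('i::finite \<Rightarrow> nat \<Rightarrow> real) \<Rightarrow> ('i \<Rightarrow> nat) \<Rightarrow> real \<Rightarrow> nat \<Rightarrow> nat" where
  "Qc \<beta> a s m t = (\<Sum>u<t. if enat u < Kt \<beta> a s m then 1 else 0)"

definition fser :: "real \<Rightarrow> ('i \<Rightarrow> nat \<Rightarrow> real) \<Rightarrow> (nat \<Rightarrow> 'i \<Rightarrow> nat) \<Rightarrow> real \<Rightarrow> real" where
  "fser \<beta> a p m = (\<Sum>t. \<beta> ^ t * (if (1-\<beta>)*m < yv a p t then 1 else 0))"

definition gser :: "real \<Rightarrow> ('i::finite \<Rightarrow> nat \<Rightarrow> real) \<Rightarrow> ('i \<Rightarrow> nat) \<Rightarrow> real \<Rightarrow> real" where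
  "gser \<beta> a s m = (\<Sum>t. \<beta> ^ t * (if enat t < Kt \<beta> a s m then 1 else 0))"

lemma unitv_inj: "(\<lambda>k. x k + unitv j k) = (\<lambda>k. x k + unitv j' k) \<Longrightarrow> j = j'"
proof -
  assume "(\<lambda>k. x k + unitv j k) = (\<lambda>k. x k + unitv j' k)"
  then have "x j + unitv j j = x j + unitv j' j" by metis
  then show "j = j'" unfolding unitv_def by (auto split: if_splits)
qed

locale path =
  fixes \<beta> :: real and a :: "'i::finite \<Rightarrow> nat \<Rightarrow> real" and s :: "'i \<Rightarrow> nat" and B :: real
  assumes beta0: "0 < \<beta>" and beta1: "\<beta> < 1"
    and apos: "\<And>i n. 1 \<le> n \<Longrightarrow> 0 < a i n"
    and adec: "\<And>i n. 1 \<le> n \<Longrightarrow> a i (Suc n) \<le> a i n"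
    and abdd: "\<And>i n. 1 \<le> n \<Longrightarrow> a i n \<le> B"
begin

lemma adec2: assumes "1 \<le> n" "n \<le> n'" shows "a i n' \<le> a i n"
  using assms(2) proof (induction rule: dec_induct)
  case base then show ?case by simp
next
  case (step k) then show ?case using adec[of k i] assms(1) by linarith
qed

lemma Va_eq: "Va \<beta> a i \<theta> m () = m \<longleftrightarrow> a i (Suc \<theta>) \<le> (1-\<beta>)*m"
  unfolding Va_def by auto

lemma cnt_ge: "enat j \<le> cnt \<beta> a s i m \<longleftrightarrow> (j = 0 \<or> (1-\<beta>)*m < a i (s i + j))"
proof (cases "\<exists>\<theta>\<ge>s i. a i (Suc \<theta>) \<le> (1-\<beta>)*m")
  case True
  define L where "L = (LEAST \<theta>. s i \<le> \<theta> \<and> a i (Suc \<theta>) \<le> (1-\<beta>)*m)"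
  have sig: "sigma_idx (Va \<beta> a) i (s i) m () = enat L"
    unfolding sigma_idx_def L_def Va_eq using True by simp
  have L1: "s i \<le> L \<and> a i (Suc L) \<le> (1-\<beta>)*m"
    unfolding L_def using True by (metis (mono_tags, lifting) LeastI_ex)
  have L2: "\<And>\<theta>. s i \<le> \<theta> \<Longrightarrow> \<theta> < L \<Longrightarrow> (1-\<beta>)*m < a i (Suc \<theta>)"
    unfolding L_def using not_less_Least by (metis (mono_tags, lifting) not_le)
  have c: "cnt \<beta> a s i m = enat (L - s i)" unfolding cnt_def sig by simp
  show ?thesis
  proof (cases "j = 0")
    case True then show ?thesis by (simp add: zero_enat_def[symmetric])
  next
    case False
    have "j \<le> L - s i \<longleftrightarrow> (1-\<beta>)*m < a i (s i + j)"
    proof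
      assume "j \<le> L - s i"
      then show "(1-\<beta>)*m < a i (s i + j)" using L2[of "s i + j - 1"] False L1 by auto
    next
      assume A: "(1-\<beta>)*m < a i (s i + j)"
      show "j \<le> L - s i"
      proof (rule ccontr)
        assume "\<not> j \<le> L - s i"
        then have "Suc L \<le> s i + j" using L1 by linarith
        then have "a i (s i + j) \<le> a i (Suc L)" using adec2 by auto
        then show False using A L1 by linarith
      qed
    qed
    then show ?thesis using c False by simp
  qed
next
  case False
  then have "sigma_idx (Va \<beta> a) i (s i) m () = \<infinity>"
    unfolding sigma_idx_def Va_eq by auto
  then have c: "cnt \<beta> a s i m = \<infinity>" unfolding cnt_def by simp
  have "j = 0 \<or> (1-\<beta>)*m < a i (s i + j)"
  proof (cases j)
    case (Suc j') then show ?thesis using False by (auto simp: not_le)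
  qed simp
  then show ?thesis using c by simp
qed


lemma ispath_step: "ispath s p \<Longrightarrow> p (Suc t) = (\<lambda>k. p t k + unitv (Jp p t) k)"
  unfolding Jp_def ispath_def by (rule someI_ex) auto

lemma ispath_J: "ispath s p \<Longrightarrow> p (Suc t) (Jp p t) = Suc (p t (Jp p t))"
proof -
  assume H: "ispath s p"
  have "p (Suc t) (Jp p t) = p t (Jp p t) + unitv (Jp p t) (Jp p t)" using ispath_step[OF H, of t] by metis
  then show ?thesis by (simp add: unitv_def)
qed

lemma ispath_notJ: "ispath s p \<Longrightarrow> k \<noteq> Jp p t \<Longrightarrow> p (Suc t) k = p t k"
proof -
  assume H: "ispath s p" "k \<noteq> Jp p t"
  have "p (Suc t) k = p t k + unitv (Jp p t) k" using ispath_step[OF H(1), of t] by metis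
  then show ?thesis using H(2) by (simp add: unitv_def)
qed

lemma ispath_ge: "ispath s p \<Longrightarrow> s k \<le> p t k"
proof (induction t)
  case 0 then show ?case by (simp add: ispath_def)
next
  case (Suc t) then show ?case using ispath_J[of p t] ispath_notJ[of p k t]
    by (cases "k = Jp p t") auto
qed

lemma ispath_mono: assumes "ispath s p" "t \<le> t'" shows "p t k \<le> p t' k"
  using assms(2) proof (induction rule: dec_induct)
  case (step n) then show ?case using ispath_J[OF assms(1), of n] ispath_notJ[OF assms(1), of k n]
    by (cases "k = Jp p n") auto
qed simp

lemma yv_pos: "ispath s p \<Longrightarrow> 0 < yv a p t"
  unfolding yv_def using ispath_J[of p t] apos by simp

lemma yv_bdd: "ispath s p \<Longrightarrow> yv a p t \<le> B"
  unfolding yv_def using ispath_J[of p t] abdd by simp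

lemma B_pos: "0 < B" using apos[where n=1 and i=undefined] abdd[where n=1 and i=undefined] by force

lemma summable_yv: assumes "ispath s p" shows "summable (\<lambda>t. \<beta> ^ t * yv a p t)"
proof (rule summable_comparison_test')
  show "summable (\<lambda>t. B * \<beta> ^ t)" using beta0 beta1 by (intro summable_mult summable_geometric) auto
  fix t show "norm (\<beta> ^ t * yv a p t) \<le> B * \<beta> ^ t"
    using yv_pos[OF assms, of t] yv_bdd[OF assms, of t] beta0 by (simp add: abs_mult mult.commute)
qed

lemma rew_eq: assumes "ispath s p" shows "rew \<beta> a p = (\<Sum>t. \<beta> ^ t * yv a p t)"
proof -
  have trm: "\<beta> ^ t * a i (p (Suc t) i) * real (p (Suc t) i - p t i) =
      (if i = Jp p t then \<beta> ^ t * yv a p t else 0)" for i t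
    using ispath_J[OF assms, of t] ispath_notJ[OF assms, of i t] by (auto simp: yv_def)
  have sm: "summable (\<lambda>t. if i = Jp p t then \<beta> ^ t * yv a p t else 0)" for i
  proof (rule summable_comparison_test')
    show "summable (\<lambda>t. \<beta> ^ t * yv a p t)" by (rule summable_yv[OF assms])
    show "norm (if i = Jp p t then \<beta> ^ t * yv a p t else 0) \<le> \<beta> ^ t * yv a p t" for t
      using yv_pos[OF assms, of t] beta0 by auto
  qed
  have "rew \<beta> a p = (\<Sum>i\<in>UNIV. \<Sum>t. if i = Jp p t then \<beta> ^ t * yv a p t else 0)"
    unfolding rew_def trm by simp
  also have "\<dots> = (\<Sum>t. \<Sum>i\<in>UNIV. if i = Jp p t then \<beta> ^ t * yv a p t else 0)"
    by (rule suminf_sum[symmetric]) (rule sm)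
  also have "\<dots> = (\<Sum>t. \<beta> ^ t * yv a p t)" by simp
  finally show ?thesis .
qed

lemma enat_min_Suc: "min (enat (Suc n)) x = min (enat n) x + (if enat (Suc n) \<le> x then 1 else 0)"
  by (cases x) (auto simp: one_enat_def)

lemma count: assumes "ispath s p"
  shows "(\<Sum>i\<in>UNIV. min (enat (p t i - s i)) (cnt \<beta> a s i m)) = enat (Pc \<beta> a p m t)"
proof (induction t)
  case 0 then show ?case using assms by (simp add: ispath_def Pc_def zero_enat_def[symmetric])
next
  case (Suc t)
  define J where "J = Jp p t"
  define \<delta> :: enat where "\<delta> = (if (1-\<beta>)*m < yv a p t then 1 else 0)"
  have eq: "min (enat (p (Suc t) i - s i)) (cnt \<beta> a s i m) =
       min (enat (p t i - s i)) (cnt \<beta> a s i m) + (if i = J then \<delta> else 0)" for i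
  proof (cases "i = J")
    case True
    have ge: "s J \<le> p t J" using ispath_ge[OF assms] .
    have "p (Suc t) i - s i = Suc (p t J - s J)" using True ispath_J[OF assms, of t] ge J_def by simp
    moreover have "enat (Suc (p t J - s J)) \<le> cnt \<beta> a s J m \<longleftrightarrow> (1-\<beta>)*m < yv a p t"
      unfolding cnt_ge yv_def using ge ispath_J[OF assms, of t] J_def
      by (simp add: Suc_diff_le[OF ge, symmetric])
    ultimately show ?thesis using True \<delta>_def enat_min_Suc by simp
  next
    case False then show ?thesis using ispath_notJ[OF assms, of i t] J_def by simp
  qed
  have "(\<Sum>i\<in>UNIV. min (enat (p (Suc t) i - s i)) (cnt \<beta> a s i m)) =
        (\<Sum>i\<in>UNIV. min (enat (p t i - s i)) (cnt \<beta> a s i m)) + \<delta>"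
    unfolding eq by (simp add: sum.distrib)
  also have "\<dots> = enat (Pc \<beta> a p m (Suc t))"
    unfolding Suc \<delta>_def Pc_def by (simp add: one_enat_def)
  finally show ?case .
qed

lemma P_le_K: "ispath s p \<Longrightarrow> enat (Pc \<beta> a p m t) \<le> Kt \<beta> a s m"
  unfolding count[symmetric] Kt_eq by (intro sum_mono) simp

lemma P_le_t: "Pc \<beta> a p m t \<le> t"
proof -
  have "Pc \<beta> a p m t \<le> (\<Sum>u<t. 1)" unfolding Pc_def by (intro sum_mono) auto
  then show ?thesis by simp
qed

lemma Q_eq: "enat (Qc \<beta> a s m t) = min (enat t) (Kt \<beta> a s m)"
proof (induction t)
  case 0 then show ?case by (simp add: Qc_def zero_enat_def[symmetric])
next
  case (Suc t)
  have "enat (Qc \<beta> a s m (Suc t)) = enat (Qc \<beta> a s m t) + (if enat t < Kt \<beta> a s m then 1 else 0)"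
    by (simp add: Qc_def one_enat_def)
  also have "\<dots> = min (enat (Suc t)) (Kt \<beta> a s m)"
    unfolding Suc enat_min_Suc by (simp add: Suc_ile_eq)
  finally show ?case .
qed

lemma P_le_Q: "ispath s p \<Longrightarrow> Pc \<beta> a p m t \<le> Qc \<beta> a s m t"
proof -
  assume "ispath s p"
  then have "enat (Pc \<beta> a p m t) \<le> min (enat t) (Kt \<beta> a s m)"
    using P_le_K[of p m t] P_le_t[of p m t] by simp
  then show ?thesis by (metis Q_eq enat_ord_simps(1))
qed

lemma sync_iff: "ispath s p \<Longrightarrow>
   (\<Sum>i\<in>UNIV. min (enat (p t i - s i)) (cnt \<beta> a s i m)) = min (enat t) (Kt \<beta> a s m)
   \<longleftrightarrow> Pc \<beta> a p m t = Qc \<beta> a s m t"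
  using count[of p t m] Q_eq[of m t] by (metis enat.inject)


lemma summable_ind: "summable (\<lambda>t. \<beta> ^ t * (if Q t then 1 else 0::real))"
proof (rule summable_comparison_test')
  show "summable (\<lambda>t. \<beta> ^ t)" using beta0 beta1 by simp
  show "norm (\<beta> ^ t * (if Q t then 1 else 0::real)) \<le> \<beta> ^ t" for t using beta0 by simp
qed

lemma fg_main:
  assumes P: "ispath s p"
  shows "fser \<beta> a p m \<le> gser \<beta> a s m"
    and "Pc \<beta> a p m t1 < Qc \<beta> a s m t1 \<Longrightarrow> (1-\<beta>)*\<beta>^t1 \<le> gser \<beta> a s m - fser \<beta> a p m"
    and "(\<forall>t. Pc \<beta> a p m t = Qc \<beta> a s m t) \<Longrightarrow> fser \<beta> a p m = gser \<beta> a s m"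
proof -
  define D where "D t = (if enat t < Kt \<beta> a s m then 1 else 0) - (if (1-\<beta>)*m < yv a p t then 1 else 0 :: real)" for t
  have E: "(\<Sum>u<t. D u) = real (Qc \<beta> a s m t) - real (Pc \<beta> a p m t)" for t
    by (induction t) (auto simp: D_def Qc_def Pc_def)
  have Enn: "0 \<le> (\<Sum>u<t. D u)" for t using E P_le_Q[OF P, of m t] by simp
  have diff: "gser \<beta> a s m - fser \<beta> a p m = (\<Sum>t. \<beta> ^ t * D t)"
    unfolding gser_def fser_def D_def right_diff_distrib
    by (rule suminf_diff[OF summable_ind summable_ind])
  have sD: "summable (\<lambda>t. \<beta> ^ t * D t)"
    unfolding D_def right_diff_distrib by (intro summable_diff summable_ind)
  have lim: "(\<lambda>n. \<Sum>t<n. \<beta> ^ t * D t) \<longlonglongrightarrow> gser \<beta> a s m - fser \<beta> a p m"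
    unfolding diff by (rule summable_LIMSEQ[OF sD])
  have sbp: "(\<Sum>t<n. \<beta>^t * D t) = \<beta>^n * (\<Sum>u<n. D u) + (1-\<beta>) * (\<Sum>t<n. \<beta>^t * (\<Sum>u<Suc t. D u))" for n
    by (induction n) (auto simp: algebra_simps)
  have tnn: "0 \<le> \<beta>^t * (\<Sum>u<Suc t. D u)" for t using beta0 Enn[of "Suc t"] by simp
  have part_nn: "0 \<le> (\<Sum>t<n. \<beta>^t * D t)" for n
  proof -
    have "0 \<le> (\<Sum>t<n. \<beta>^t * (\<Sum>u<Suc t. D u))" using tnn by (simp add: sum_nonneg)
    moreover have "0 \<le> \<beta>^n * (\<Sum>u<n. D u)" using beta0 Enn[of n] by simp
    ultimately show ?thesis unfolding sbp using beta1 by simp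
  qed
  show "fser \<beta> a p m \<le> gser \<beta> a s m"
    using LIMSEQ_le_const[OF lim, of 0] part_nn by auto
  show "(1-\<beta>)*\<beta>^t1 \<le> gser \<beta> a s m - fser \<beta> a p m" if lt: "Pc \<beta> a p m t1 < Qc \<beta> a s m t1"
  proof -
    have "t1 \<noteq> 0"
    proof
      assume "t1 = 0" then show False using lt by (simp add: Pc_def Qc_def)
    qed
    then obtain t0 where t0: "t1 = Suc t0" by (cases t1) auto
    have E1: "1 \<le> (\<Sum>u<Suc t0. D u)" using E[of t1] lt t0 by simp
    have "(1-\<beta>)*\<beta>^t1 \<le> (\<Sum>t<n. \<beta>^t * D t)" if n: "n \<ge> t1" for n
    proof -
      have "\<beta>^t1 \<le> \<beta>^t0 * (\<Sum>u<Suc t0. D u)"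
        using E1 beta0 beta1 t0 by (smt (verit) mult_left_mono mult_right_le_one_le power_Suc2 zero_le_power mult.commute)
      also have "\<dots> \<le> (\<Sum>t<n. \<beta>^t * (\<Sum>u<Suc t. D u))"
        using n t0 tnn
        by (intro member_le_sum[where f="\<lambda>t. \<beta>^t * (\<Sum>u<Suc t. D u)"]) auto
      finally have "(1-\<beta>)*\<beta>^t1 \<le> (1-\<beta>) * (\<Sum>t<n. \<beta>^t * (\<Sum>u<Suc t. D u))"
        using beta1 by (intro mult_left_mono) auto
      moreover have "0 \<le> \<beta>^n * (\<Sum>u<n. D u)" using beta0 Enn by simp
      ultimately show ?thesis unfolding sbp by linarith
    qed
    then show ?thesis using LIMSEQ_le_const[OF lim] by blast
  qed
  show "fser \<beta> a p m = gser \<beta> a s m" if eq: "\<forall>t. Pc \<beta> a p m t = Qc \<beta> a s m t"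
  proof -
    have "D t = 0" for t
    proof -
      have "D t = (\<Sum>u<Suc t. D u) - (\<Sum>u<t. D u)" by simp
      then show ?thesis unfolding E using eq by simp
    qed
    then show ?thesis using diff by simp
  qed
qed

lemma gser_eq: "1 - epow \<beta> (Kt \<beta> a s m) = (1-\<beta>) * gser \<beta> a s m"
proof (cases "Kt \<beta> a s m")
  case (enat k)
  have "gser \<beta> a s m = (\<Sum>t<k. \<beta> ^ t * (if enat t < Kt \<beta> a s m then 1 else 0))"
    unfolding gser_def by (rule suminf_finite) (auto simp: enat)
  also have "\<dots> = (\<Sum>t<k. \<beta> ^ t)" using enat by simp
  also have "\<dots> = (1 - \<beta>^k) / (1 - \<beta>)" using beta1 by (simp add: sum_gp_strict)
  finally show ?thesis using enat beta1 by (simp add: epow_def)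
next
  case infinity
  have "gser \<beta> a s m = (\<Sum>t. \<beta> ^ t)" unfolding gser_def using infinity by simp
  also have "\<dots> = 1 / (1 - \<beta>)" using beta0 beta1 by (intro suminf_geometric) simp
  finally show ?thesis using infinity beta1 by (simp add: epow_def)
qed


end

definition gsel :: "('i \<Rightarrow> nat \<Rightarrow> real) \<Rightarrow> ('i \<Rightarrow> nat) \<Rightarrow> 'i" where
  "gsel a r = (SOME j. j \<in> {j. \<forall>k. a k (Suc (r k)) \<le> a j (Suc (r j))})"

primrec gp :: "('i \<Rightarrow> nat \<Rightarrow> real) \<Rightarrow> ('i \<Rightarrow> nat) \<Rightarrow> nat \<Rightarrow> 'i \<Rightarrow> nat" where
  "gp a s 0 = s"
| "gp a s (Suc t) = (\<lambda>k. gp a s t k + unitv (gsel a (gp a s t)) k)"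

lemma gsel_max: "a k (Suc (r k)) \<le> a (gsel a r) (Suc (r (gsel a r)))"
  for a :: "'i::finite \<Rightarrow> nat \<Rightarrow> real"
proof -
  let ?f = "\<lambda>k. a k (Suc (r k))"
  have "Max (range ?f) \<in> range ?f" by (intro Max_in) simp_all
  then obtain j where j: "Max (range ?f) = ?f j" by (rule imageE)
  have "\<forall>k. ?f k \<le> ?f j" unfolding j[symmetric] by (intro allI Max_ge) auto
  then have "\<exists>j. j \<in> {j. \<forall>k. ?f k \<le> ?f j}" by blast
  then have "gsel a r \<in> {j. \<forall>k. ?f k \<le> ?f j}" unfolding gsel_def by (rule someI_ex)
  then show ?thesis by simp
qed

lemma gp_path: "ispath s (gp a s)"
  unfolding ispath_def by auto

lemma gp_J: "Jp (gp a s) t = gsel a (gp a s t)"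
proof -
  have "gp a s (Suc t) = (\<lambda>k. gp a s t k + unitv (Jp (gp a s) t) k)"
    unfolding Jp_def by (rule someI_ex) auto
  then have "(\<lambda>k. gp a s t k + unitv (Jp (gp a s) t) k) = (\<lambda>k. gp a s t k + unitv (gsel a (gp a s t)) k)"
    by (simp only: gp.simps(2))
  then show ?thesis by (rule unitv_inj)
qed

context path begin

lemma gp_greedy: "a k (Suc (gp a s t k)) \<le> yv a (gp a s) t"
proof -
  have "yv a (gp a s) t = a (gsel a (gp a s t)) (Suc (gp a s t (gsel a (gp a s t))))"
    by (simp add: yv_def gp_J unitv_def)
  then show ?thesis using gsel_max[of a k "gp a s t"] by simp
qed

lemma greedy_sync:
  assumes P: "ispath s p" and G: "\<And>t k. a k (Suc (p t k)) \<le> yv a p t"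
  shows "Pc \<beta> a p m t = Qc \<beta> a s m t"
proof (cases "\<forall>u<t. (1-\<beta>)*m < yv a p u")
  case True
  then have Pt: "Pc \<beta> a p m t = t" unfolding Pc_def by simp
  then have "enat t \<le> Kt \<beta> a s m" using P_le_K[OF P, of m t] by simp
  then have "enat (Qc \<beta> a s m t) = enat t" using Q_eq[of m t] by simp
  then show ?thesis using Pt by simp
next
  case False
  then obtain u where u: "u < t" "yv a p u \<le> (1-\<beta>)*m" by auto
  have ck: "cnt \<beta> a s k m \<le> enat (p u k - s k)" for k
  proof (rule ccontr)
    assume "\<not> cnt \<beta> a s k m \<le> enat (p u k - s k)"
    then have "enat (Suc (p u k - s k)) \<le> cnt \<beta> a s k m" by (simp add: Suc_ile_eq)
    then have "(1-\<beta>)*m < a k (s k + Suc (p u k - s k))" unfolding cnt_ge by simp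
    moreover have "s k + Suc (p u k - s k) = Suc (p u k)" using ispath_ge[OF P, where k=k and t=u] by simp
    moreover have "a k (Suc (p u k)) \<le> yv a p u" by (rule G)
    ultimately show False using u by simp
  qed
  have "min (enat (p t k - s k)) (cnt \<beta> a s k m) = cnt \<beta> a s k m" for k
  proof -
    have "p u k \<le> p t k" using ispath_mono[OF P, where t=u and t'=t and k=k] u by simp
    then have "cnt \<beta> a s k m \<le> enat (p t k - s k)" using ck[of k] by (meson enat_ord_simps(1) diff_le_mono order_trans)
    then show ?thesis by simp
  qed
  then have "enat (Pc \<beta> a p m t) = Kt \<beta> a s m" unfolding count[OF P, symmetric] Kt_eq by simp
  moreover have "Pc \<beta> a p m t \<le> t" by (rule P_le_t)
  ultimately have "enat (Qc \<beta> a s m t) = enat (Pc \<beta> a p m t)"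
    unfolding Q_eq by (metis enat_ord_simps(1) min.absorb2)
  then show ?thesis by simp
qed

lemma gp_sync: "Pc \<beta> a (gp a s) m t = Qc \<beta> a s m t"
  by (rule greedy_sync[OF gp_path gp_greedy])

lemma yv_Suc_le:
  assumes P: "ispath s p" and G: "\<And>t k. a k (Suc (p t k)) \<le> yv a p t"
  shows "yv a p (Suc t) \<le> yv a p t"
proof (cases "Jp p (Suc t) = Jp p t")
  case True
  define j where "j = Jp p t"
  have e1: "yv a p (Suc t) = a j (p (Suc (Suc t)) j)" using True unfolding j_def yv_def by simp
  have e2: "p (Suc (Suc t)) j = Suc (p (Suc t) j)" using ispath_J[OF P, of "Suc t"] True unfolding j_def by simp
  have e3: "p (Suc t) j = Suc (p t j)" using ispath_J[OF P, of t] unfolding j_def .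
  have e4: "yv a p t = a j (Suc (p t j))" using e3 unfolding yv_def j_def by simp
  have "a j (Suc (Suc (p t j))) \<le> a j (Suc (p t j))" by (rule adec) simp
  then show ?thesis using e1 e2 e3 e4 by simp
next
  case False
  define j where "j = Jp p (Suc t)"
  have e1: "yv a p (Suc t) = a j (p (Suc (Suc t)) j)" unfolding j_def yv_def by simp
  have e2: "p (Suc (Suc t)) j = Suc (p (Suc t) j)" using ispath_J[OF P, of "Suc t"] unfolding j_def .
  have e3: "p (Suc t) j = p t j" using ispath_notJ[OF P False] unfolding j_def .
  have "a j (Suc (p t j)) \<le> yv a p t" by (rule G)
  then show ?thesis using e1 e2 e3 by simp
qed

lemma yv_antimono:
  assumes P: "ispath s p" and G: "\<And>t k. a k (Suc (p t k)) \<le> yv a p t" and ut: "u \<le> t"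
  shows "yv a p t \<le> yv a p u"
  using ut
proof (induction rule: dec_induct)
  case (step t)
  then show ?case using yv_Suc_le[OF P G, of t] by simp
qed simp

lemma cnt0: "cnt \<beta> a s i 0 = \<infinity>"
proof (rule ccontr)
  assume "cnt \<beta> a s i 0 \<noteq> \<infinity>"
  then obtain n where n: "cnt \<beta> a s i 0 = enat n" by auto
  have "enat (Suc n) \<le> cnt \<beta> a s i 0" unfolding cnt_ge using apos by simp
  then show False using n by simp
qed

lemma K0: "Kt \<beta> a s 0 = \<infinity>"
proof -
  have "cnt \<beta> a s undefined 0 \<le> Kt \<beta> a s 0"
    unfolding Kt_eq by (rule member_le_sum) auto
  then show ?thesis unfolding cnt0 by simp
qed

lemma sync0: "ispath s p \<Longrightarrow> Pc \<beta> a p 0 t = Qc \<beta> a s 0 t"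
proof -
  assume P: "ispath s p"
  have "(1-\<beta>)*0 < yv a p u" for u using yv_pos[OF P, of u] by simp
  then show ?thesis by (simp add: Pc_def Qc_def K0)
qed


lemma gpath: "ispath s (gp a s)" by (rule gp_path)

lemma int_f:
  assumes P: "ispath s p"
  shows "set_integrable lborel {0..} (fser \<beta> a p)"
    and "(LBINT m:{0..}. fser \<beta> a p m) = rew \<beta> a p / (1-\<beta>)"
proof -
  define x where "x t = yv a p t / (1-\<beta>)" for t
  have x0: "0 \<le> x t" for t using yv_pos[OF P, of t] beta1 by (simp add: x_def)
  define \<phi> where "\<phi> t m = \<beta>^t * indicator {0..<x t} m" for t and m :: real
  have pt: "indicator {0..} m *\<^sub>R fser \<beta> a p m = (\<Sum>t. \<phi> t m)" for m
  proof (cases "0 \<le> m")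
    case True
    have "(1-\<beta>)*m < yv a p t \<longleftrightarrow> m < x t" for t
      using beta1 by (simp add: x_def pos_less_divide_eq mult.commute)
    then show ?thesis using True by (simp add: fser_def \<phi>_def indicator_def of_bool_def)
  next
    case False then show ?thesis by (simp add: \<phi>_def indicator_def)
  qed
  have i\<phi>: "integrable lborel (\<phi> t)" for t
    unfolding \<phi>_def by (intro integrable_mult_right integrable_real_indicator) (auto simp: x0)
  have I\<phi>: "integral\<^sup>L lborel (\<phi> t) = \<beta>^t * x t" for t unfolding \<phi>_def using x0 by simp
  have n\<phi>: "norm (\<phi> t m) = \<phi> t m" for t m using beta0 by (simp add: \<phi>_def)
  have sm1: "AE m in lborel. summable (\<lambda>t. norm (\<phi> t m))"
  proof (rule AE_I2, rule summable_comparison_test')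
    show "summable (\<lambda>t. \<beta> ^ t)" using beta0 beta1 by simp
    show "norm (norm (\<phi> t m)) \<le> \<beta> ^ t" for t m using beta0 by (simp add: \<phi>_def indicator_def)
  qed
  have sm2: "summable (\<lambda>t. \<integral>m. norm (\<phi> t m) \<partial>lborel)"
    unfolding n\<phi> I\<phi> x_def using summable_divide[OF summable_yv[OF P], of "1-\<beta>"] by simp
  have "integrable lborel (\<lambda>m. \<Sum>t. \<phi> t m)" by (rule integrable_suminf[OF i\<phi> sm1 sm2])
  then show "set_integrable lborel {0..} (fser \<beta> a p)" unfolding set_integrable_def pt .
  have "(LBINT m:{0..}. fser \<beta> a p m) = (\<integral>m. (\<Sum>t. \<phi> t m) \<partial>lborel)"
    unfolding set_lebesgue_integral_def pt ..
  also have "\<dots> = (\<Sum>t. integral\<^sup>L lborel (\<phi> t))" by (rule integral_suminf[OF i\<phi> sm1 sm2])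
  also have "\<dots> = (\<Sum>t. \<beta> ^ t * yv a p t / (1-\<beta>))" unfolding I\<phi> x_def by simp
  also have "\<dots> = rew \<beta> a p / (1-\<beta>)" unfolding rew_eq[OF P] by (rule suminf_divide[OF summable_yv[OF P]])
  finally show "(LBINT m:{0..}. fser \<beta> a p m) = rew \<beta> a p / (1-\<beta>)" .
qed

lemma gser_fgp: "gser \<beta> a s m = fser \<beta> a (gp a s) m"
  using fg_main(3)[OF gpath, where m=m] gp_sync by simp

lemma int_g: "set_integrable lborel {0..} (gser \<beta> a s)"
  using int_f(1)[OF gpath] unfolding gser_fgp .

lemma Ih_eq: "(LBINT m:{0..}. 1 - epow \<beta> (Kt \<beta> a s m)) = (1-\<beta>) * (LBINT m:{0..}. gser \<beta> a s m)"
proof -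
  have "(LBINT m:{0..}. 1 - epow \<beta> (Kt \<beta> a s m)) = (LBINT m:{0..}. (1-\<beta>) * gser \<beta> a s m)"
    unfolding gser_eq ..
  also have "\<dots> = (1-\<beta>) * (LBINT m:{0..}. gser \<beta> a s m)" by simp
  finally show ?thesis .
qed

lemma Ih_gp: "(LBINT m:{0..}. 1 - epow \<beta> (Kt \<beta> a s m)) = rew \<beta> a (gp a s)"
  unfolding Ih_eq gser_fgp int_f(2)[OF gpath] using beta1 by simp

lemma rew_le: "ispath s p \<Longrightarrow> rew \<beta> a p \<le> (LBINT m:{0..}. 1 - epow \<beta> (Kt \<beta> a s m))"
proof -
  assume P: "ispath s p"
  have "(LBINT m:{0..}. fser \<beta> a p m) \<le> (LBINT m:{0..}. gser \<beta> a s m)"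
    by (rule set_integral_mono[OF int_f(1)[OF P] int_g fg_main(1)[OF P]])
  then have "(1-\<beta>) * (LBINT m:{0..}. fser \<beta> a p m) \<le> (1-\<beta>) * (LBINT m:{0..}. gser \<beta> a s m)"
    using beta1 by (intro mult_left_mono) auto
  then show ?thesis unfolding Ih_eq int_f(2)[OF P] using beta1 by simp
qed

lemma rew_sync: assumes P: "ispath s p" and S: "\<forall>t. \<forall>m>0. Pc \<beta> a p m t = Qc \<beta> a s m t"
  shows "rew \<beta> a p = (LBINT m:{0..}. 1 - epow \<beta> (Kt \<beta> a s m))"
proof -
  have "fser \<beta> a p m = gser \<beta> a s m" if "m \<in> {0..}" for m
  proof (cases "m = 0")
    case True then show ?thesis using sync0[OF P] fg_main(3)[OF P] by simp
  next
    case False then show ?thesis using that S fg_main(3)[OF P] by simp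
  qed
  then have "(LBINT m:{0..}. fser \<beta> a p m) = (LBINT m:{0..}. gser \<beta> a s m)"
    by (intro set_lebesgue_integral_cong) auto
  then show ?thesis unfolding Ih_eq int_f(2)[OF P] using beta1 by (auto simp: field_simps)
qed

lemma Pc_mono: "m0 \<le> m \<Longrightarrow> Pc \<beta> a p m t \<le> Pc \<beta> a p m0 t"
  unfolding Pc_def
proof (intro sum_mono)
  fix u assume "m0 \<le> m"
  then have "(1-\<beta>)*m0 \<le> (1-\<beta>)*m" using beta1 by (intro mult_left_mono) auto
  then show "(if (1-\<beta>)*m < yv a p u then 1 else 0) \<le> (if (1-\<beta>)*m0 < yv a p u then 1 else (0::nat))"
    by auto
qed

lemma K_rc:
  assumes k: "enat k \<le> Kt \<beta> a s m0"
  shows "\<exists>\<delta>>0. \<forall>m. m0 \<le> m \<and> m < m0 + \<delta> \<longrightarrow> enat k \<le> Kt \<beta> a s m"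
proof -
  define j where "j i = (case cnt \<beta> a s i m0 of enat n \<Rightarrow> min n k | \<infinity> \<Rightarrow> k)" for i
  have ej: "enat (j i) = min (enat k) (cnt \<beta> a s i m0)" for i
    by (cases "cnt \<beta> a s i m0") (auto simp: j_def)
  have jle: "enat (j i) \<le> cnt \<beta> a s i m0" for i using ej by simp
  have sumj: "enat k \<le> (\<Sum>i\<in>UNIV. enat (j i))"
  proof (cases "\<exists>i. enat k \<le> cnt \<beta> a s i m0")
    case True
    then obtain i where "enat k \<le> cnt \<beta> a s i m0" ..
    then have "enat (j i) = enat k" using ej by simp
    moreover have "enat (j i) \<le> (\<Sum>i\<in>UNIV. enat (j i))" by (rule member_le_sum) auto
    ultimately show ?thesis by simp
  next
    case False
    then have "enat (j i) = cnt \<beta> a s i m0" for i using ej by (simp add: min_def)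
    then show ?thesis using k unfolding Kt_eq by simp
  qed
  have ev: "\<forall>\<^sub>F m in nhds m0. j i = 0 \<or> (1-\<beta>)*m < a i (s i + j i)" for i
  proof (cases "j i = 0")
    case False
    then have lt: "(1-\<beta>)*m0 < a i (s i + j i)" using jle[of i] unfolding cnt_ge by simp
    define e where "e = (a i (s i + j i) - (1-\<beta>)*m0) / (1-\<beta>)"
    have e0: "0 < e" using lt beta1 by (simp add: e_def)
    have "(1-\<beta>)*y < a i (s i + j i)" if "dist y m0 < e" for y
    proof -
      have "y < m0 + e" using that by (simp add: dist_real_def)
      then have "(1-\<beta>)*y < (1-\<beta>)*(m0 + e)" using beta1 by (intro mult_strict_left_mono) auto
      also have "\<dots> = a i (s i + j i)" using beta1 by (simp add: e_def field_simps)
      finally show ?thesis .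
    qed
    then show ?thesis unfolding eventually_nhds_metric using e0 by blast
  qed simp
  then have "\<forall>\<^sub>F m in nhds m0. \<forall>i. j i = 0 \<or> (1-\<beta>)*m < a i (s i + j i)"
    by (simp add: eventually_all_finite)
  then obtain \<delta> where \<delta>: "\<delta> > 0" "\<And>m. dist m m0 < \<delta> \<Longrightarrow> \<forall>i. j i = 0 \<or> (1-\<beta>)*m < a i (s i + j i)"
    unfolding eventually_nhds_metric by blast
  have "enat k \<le> Kt \<beta> a s m" if m: "m0 \<le> m" "m < m0 + \<delta>" for m
  proof -
    have "dist m m0 < \<delta>" using m by (simp add: dist_real_def)
    then have "enat (j i) \<le> cnt \<beta> a s i m" for i using \<delta>(2) unfolding cnt_ge by blast
    then have "(\<Sum>i\<in>UNIV. enat (j i)) \<le> Kt \<beta> a s m" unfolding Kt_eq by (intro sum_mono)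
    then show ?thesis using sumj by simp
  qed
  then show ?thesis using \<delta>(1) by blast
qed

lemma rew_lt:
  assumes P: "ispath s p" and m0: "0 < m0" and lt: "Pc \<beta> a p m0 t1 < Qc \<beta> a s m0 t1"
  shows "rew \<beta> a p < (LBINT m:{0..}. 1 - epow \<beta> (Kt \<beta> a s m))"
proof -
  have "enat (Qc \<beta> a s m0 t1) \<le> Kt \<beta> a s m0" using Q_eq[of m0 t1] by simp
  from K_rc[OF this] obtain \<delta> where \<delta>: "\<delta> > 0"
    "\<And>m. m0 \<le> m \<Longrightarrow> m < m0 + \<delta> \<Longrightarrow> enat (Qc \<beta> a s m0 t1) \<le> Kt \<beta> a s m" by blast
  define \<eta> where "\<eta> = (1-\<beta>)*\<beta>^t1"
  have \<eta>0: "0 < \<eta>" using beta0 beta1 by (simp add: \<eta>_def)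
  have gap: "\<eta> \<le> gser \<beta> a s m - fser \<beta> a p m" if m: "m0 \<le> m" "m < m0 + \<delta>" for m
  proof -
    have q: "Qc \<beta> a s m0 t1 \<le> t1" using Q_eq[of m0 t1] by (metis enat_ord_simps(1) min.cobounded1)
    have "enat (Qc \<beta> a s m0 t1) \<le> min (enat t1) (Kt \<beta> a s m)" using \<delta>(2)[OF m] q by simp
    then have "Qc \<beta> a s m0 t1 \<le> Qc \<beta> a s m t1" unfolding Q_eq[symmetric] by simp
    moreover have "Pc \<beta> a p m t1 \<le> Pc \<beta> a p m0 t1" by (rule Pc_mono[OF m(1)])
    ultimately have "Pc \<beta> a p m t1 < Qc \<beta> a s m t1" using lt by simp
    then show ?thesis unfolding \<eta>_def by (rule fg_main(2)[OF P])
  qed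
  define I where "I = {m0..<m0+\<delta>}"
  have hle: "\<eta> * indicator I m \<le> gser \<beta> a s m - fser \<beta> a p m" if "m \<in> {0..}" for m
    using gap fg_main(1)[OF P, of m] by (auto simp: I_def indicator_def)
  have iI: "set_integrable lborel {0..} (\<lambda>m. \<eta> * indicator I m)"
    unfolding set_integrable_def I_def using m0 \<delta>(1)
    by (intro integrable_mult_indicator integrable_mult_right integrable_real_indicator) auto
  have eqI: "(LBINT m:{0..}. \<eta> * indicator I m) = \<eta> * \<delta>"
  proof -
    have "(\<lambda>m. indicator {0..} m *\<^sub>R (\<eta> * indicator I m)) = (\<lambda>m. \<eta> * indicator I m)"
      using m0 by (auto simp: I_def indicator_def fun_eq_iff)
    then show ?thesis unfolding set_lebesgue_integral_def I_def using \<delta>(1) by simp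
  qed
  have "(LBINT m:{0..}. \<eta> * indicator I m) \<le> (LBINT m:{0..}. gser \<beta> a s m - fser \<beta> a p m)"
    by (rule set_integral_mono[OF iI set_integral_diff(1)[OF int_g int_f(1)[OF P]] hle])
  also have "\<dots> = (LBINT m:{0..}. gser \<beta> a s m) - (LBINT m:{0..}. fser \<beta> a p m)"
    by (rule set_integral_diff(2)[OF int_g int_f(1)[OF P]])
  finally have "0 < (LBINT m:{0..}. gser \<beta> a s m) - (LBINT m:{0..}. fser \<beta> a p m)"
    using \<eta>0 \<delta>(1) eqI by (smt (verit) mult_pos_pos)
  then have "(1-\<beta>) * (LBINT m:{0..}. fser \<beta> a p m) < (1-\<beta>) * (LBINT m:{0..}. gser \<beta> a s m)"
    using beta1 by simp
  then show ?thesis unfolding Ih_eq int_f(2)[OF P] using beta1 by simp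
qed

lemma sum_ind_eq: "(\<Sum>u<n. if Q u then 1 else 0::nat) = n \<longleftrightarrow> (\<forall>u<n. Q u)"
proof (induction n)
  case (Suc n)
  have "(\<Sum>u<n. if Q u then 1 else 0::nat) \<le> n"
  proof -
    have "(\<Sum>u<n. if Q u then 1 else 0::nat) \<le> (\<Sum>u<n. 1)" by (intro sum_mono) auto
    then show ?thesis by simp
  qed
  then show ?case using Suc by (auto simp: less_Suc_eq)
qed simp

lemma N_eq: "N_idx (Va \<beta> a) t s () = yv a (gp a s) t / (1-\<beta>)"
proof -
  let ?y = "yv a (gp a s) t"
  have y0: "0 < ?y" by (rule yv_pos[OF gpath])
  have key: "Kt \<beta> a s m \<le> enat t \<longleftrightarrow> ?y \<le> (1-\<beta>)*m" for m
  proof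
    assume "Kt \<beta> a s m \<le> enat t"
    then have "enat (Qc \<beta> a s m (Suc t)) \<le> enat t" unfolding Q_eq by (simp add: min_le_iff_disj)
    then have "Pc \<beta> a (gp a s) m (Suc t) \<noteq> Suc t" unfolding gp_sync by simp
    then obtain u where u: "u < Suc t" "\<not> (1-\<beta>)*m < yv a (gp a s) u"
      unfolding Pc_def sum_ind_eq by blast
    have "?y \<le> yv a (gp a s) u" using u(1) by (intro yv_antimono[OF gpath gp_greedy]) simp
    then show "?y \<le> (1-\<beta>)*m" using u(2) by simp
  next
    assume A: "?y \<le> (1-\<beta>)*m"
    have "Pc \<beta> a (gp a s) m (Suc t) = Pc \<beta> a (gp a s) m t" using A by (simp add: Pc_def)
    then have "Pc \<beta> a (gp a s) m (Suc t) \<le> t" using P_le_t by metis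
    then have "enat (Qc \<beta> a s m (Suc t)) \<le> enat t" unfolding gp_sync[symmetric] by simp
    then show "Kt \<beta> a s m \<le> enat t" unfolding Q_eq by (auto simp: min_def split: if_splits)
  qed
  have "{m. 0 \<le> m \<and> tau_tot (Va \<beta> a) m s () \<le> enat t} = {?y / (1-\<beta>)..}"
  proof -
    have "0 \<le> m \<and> ?y \<le> (1-\<beta>)*m \<longleftrightarrow> ?y / (1-\<beta>) \<le> m" for m
      using y0 beta1 by (auto simp: pos_divide_le_eq mult.commute intro: order_trans[of 0 "?y/(1-\<beta>)"])
    then show ?thesis using key unfolding Kt_def by auto
  qed
  then show ?thesis unfolding N_idx_def by simp
qed

lemma Ih_N: "(LBINT m:{0..}. 1 - epow \<beta> (Kt \<beta> a s m)) = (1-\<beta>) * (\<Sum>t. \<beta>^t * N_idx (Va \<beta> a) t s ())"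
proof -
  have "(\<Sum>t. \<beta>^t * N_idx (Va \<beta> a) t s ()) = (\<Sum>t. \<beta>^t * yv a (gp a s) t / (1-\<beta>))"
    unfolding N_eq by simp
  also have "\<dots> = rew \<beta> a (gp a s) / (1-\<beta>)"
    unfolding rew_eq[OF gpath] by (rule suminf_divide[OF summable_yv[OF gpath]])
  finally show ?thesis unfolding Ih_gp using beta1 by simp
qed

end

lemma geo_stop:
  fixes \<beta> :: real
  assumes b0: "0 < \<beta>" and b1: "\<beta> < 1" and e: "enat \<theta> \<le> e"
  defines "w \<equiv> (\<lambda>u. if \<theta> \<le> u \<and> enat u < e then \<beta> ^ (u - \<theta>) else 0)"
  shows "summable w" "(1-\<beta>) * suminf w + epow \<beta> (e - enat \<theta>) = 1"
proof -
  have "summable w \<and> (1-\<beta>) * suminf w + epow \<beta> (e - enat \<theta>) = 1"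
  proof (cases e)
    case (enat n)
    have fin: "suminf w = (\<Sum>u<n. w u)" by (rule suminf_finite) (auto simp: w_def enat)
    have sw: "summable w" by (rule summable_finite[of "{..<n}"]) (auto simp: w_def enat)
    have tn: "\<theta> \<le> n" using e enat by simp
    have "(1-\<beta>) * (\<Sum>u<n. w u) = 1 - \<beta>^(n-\<theta>)"
      using tn
    proof (induction rule: dec_induct)
      case base
      have "(\<Sum>u<\<theta>. w u) = 0" by (intro sum.neutral) (auto simp: w_def)
      then show ?case by simp
    next
      case (step k)
      have "(\<Sum>u<Suc k. w u) = (\<Sum>u<k. w u) + \<beta>^(k-\<theta>)" using step(1,2) enat by (simp add: w_def)
      then have "(1-\<beta>) * (\<Sum>u<Suc k. w u) = (1-\<beta>) * (\<Sum>u<k. w u) + (1-\<beta>) * \<beta>^(k-\<theta>)"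
        by (simp add: distrib_left)
      also have "\<dots> = 1 - \<beta>^(k-\<theta>) + (1-\<beta>) * \<beta>^(k-\<theta>)" using step(3) by simp
      also have "\<dots> = 1 - \<beta>^(Suc k-\<theta>)" using step(1) by (simp add: Suc_diff_le algebra_simps)
      finally show ?case .
    qed
    then show ?thesis using sw fin enat tn by (simp add: epow_def)
  next
    case infinity
    have "(\<lambda>k. w (k + \<theta>)) = (\<lambda>k. \<beta>^k)" by (auto simp: w_def infinity)
    moreover have "(\<lambda>k. \<beta>^k) sums (1/(1-\<beta>))" using b0 b1 by (intro geometric_sums) simp
    ultimately have "(\<lambda>k. w (k + \<theta>)) sums (1/(1-\<beta>))" by simp
    moreover have "(\<Sum>i<\<theta>. w i) = 0" by (intro sum.neutral) (auto simp: w_def)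
    ultimately have "w sums (1/(1-\<beta>))" unfolding sums_iff_shift by simp
    then show ?thesis using infinity b1 by (simp add: sums_iff epow_def)
  qed
  then show "summable w" "(1-\<beta>) * suminf w + epow \<beta> (e - enat \<theta>) = 1" by auto
qed

context path begin

lemma pay_bound:
  fixes i :: 'i
  assumes e: "enat \<theta> \<le> e" and m: "0 \<le> m"
  defines "PP \<equiv> (\<Sum>u. if \<theta> \<le> u \<and> enat u < e then \<beta>^(u-\<theta>) * a i (u+1) else 0) + m * epow \<beta> (e - enat \<theta>)"
  shows "0 \<le> PP" "PP \<le> B/(1-\<beta>) + m" "a i (Suc \<theta>) \<le> (1-\<beta>)*m \<Longrightarrow> PP \<le> m"
proof -
  define w where "w u = (if \<theta> \<le> u \<and> enat u < e then \<beta> ^ (u - \<theta>) else 0)" for u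
  have G: "summable w" "(1-\<beta>) * suminf w + epow \<beta> (e - enat \<theta>) = 1"
    using geo_stop[OF beta0 beta1 e] by (simp_all add: w_def[abs_def])
  have w0: "0 \<le> w u" for u using beta0 by (simp add: w_def)
  have ep: "0 \<le> epow \<beta> x" "epow \<beta> x \<le> 1" for x
    using beta0 beta1 by (cases x; simp add: epow_def power_le_one)+
  have trm: "(if \<theta> \<le> u \<and> enat u < e then \<beta>^(u-\<theta>) * a i (u+1) else 0) = w u * a i (u+1)" for u
    by (simp add: w_def)
  have ah: "0 < a i (u+1)" "a i (u+1) \<le> B" for u using apos abdd by auto
  have s1: "summable (\<lambda>u. w u * a i (u+1))"
  proof (rule summable_comparison_test')
    show "summable (\<lambda>u. w u * B)" using G(1) by (rule summable_mult2)
    show "norm (w u * a i (u+1)) \<le> w u * B" for u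
      using w0[of u] ah[of u] by (simp add: abs_mult mult_left_mono)
  qed
  have PP: "PP = (\<Sum>u. w u * a i (u+1)) + m * epow \<beta> (e - enat \<theta>)" unfolding PP_def trm ..
  have sw1: "suminf w \<le> 1/(1-\<beta>)"
  proof -
    have "(1-\<beta>) * suminf w \<le> 1" using G(2) ep(1)[of "e - enat \<theta>"] by linarith
    then show ?thesis using beta1 by (simp add: field_simps)
  qed
  show "0 \<le> PP" unfolding PP using w0 ah m ep
    by (intro add_nonneg_nonneg suminf_nonneg[OF s1] mult_nonneg_nonneg) (auto intro: less_imp_le)
  have "(\<Sum>u. w u * a i (u+1)) \<le> (\<Sum>u. w u * B)"
    using w0 ah by (intro suminf_le s1 summable_mult2 G(1)) (simp add: mult_left_mono)
  also have "\<dots> = suminf w * B" by (rule suminf_mult2[OF G(1), symmetric])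
  also have "\<dots> \<le> 1/(1-\<beta>) * B" using sw1 B_pos by (intro mult_right_mono) auto
  finally have "(\<Sum>u. w u * a i (u+1)) \<le> B/(1-\<beta>)" by simp
  moreover have "m * epow \<beta> (e - enat \<theta>) \<le> m" using ep m by (simp add: mult_left_le)
  ultimately show "PP \<le> B/(1-\<beta>) + m" unfolding PP by linarith
  assume A: "a i (Suc \<theta>) \<le> (1-\<beta>)*m"
  have "w u * a i (u+1) \<le> w u * ((1-\<beta>)*m)" for u
  proof (cases "\<theta> \<le> u")
    case True
    have "a i (u+1) \<le> a i (Suc \<theta>)" using True by (intro adec2) auto
    then show ?thesis using A w0[of u] by (intro mult_left_mono) auto
  qed (simp add: w_def)
  then have "(\<Sum>u. w u * a i (u+1)) \<le> (\<Sum>u. w u * ((1-\<beta>)*m))"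
    by (intro suminf_le s1 summable_mult2 G(1))
  also have "\<dots> = suminf w * ((1-\<beta>)*m)" by (rule suminf_mult2[OF G(1), symmetric])
  also have "\<dots> = m * ((1-\<beta>) * suminf w)" by (simp add: algebra_simps)
  also have "(1-\<beta>) * suminf w = 1 - epow \<beta> (e - enat \<theta>)" using G(2) by linarith
  finally show "PP \<le> m" unfolding PP by (simp add: algebra_simps)
qed

end

lemma cont_rat:
  fixes f :: "real \<Rightarrow> real"
  assumes c: "continuous_on {0..} f" and x: "0 \<le> x" and q: "\<And>q. q \<in> \<rat> \<Longrightarrow> x < q \<Longrightarrow> f q \<le> 0"
  shows "f x \<le> 0"
proof -
  have "\<exists>q\<in>\<rat>. x < q \<and> q < x + 1 / real (Suc n)" for n by (rule Rats_dense_in_real) simp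
  then obtain r where r: "\<And>n. r n \<in> \<rat> \<and> x < r n \<and> r n < x + 1 / real (Suc n)" by metis
  have lim1: "(\<lambda>n. x + 1 / real (Suc n)) \<longlonglongrightarrow> x"
    using LIMSEQ_inverse_real_of_nat_add[of x] by (simp add: inverse_eq_divide)
  have "r \<longlonglongrightarrow> x"
  proof (rule real_tendsto_sandwich[OF _ _ tendsto_const lim1])
    show "\<forall>\<^sub>F n in sequentially. x \<le> r n" using r by (intro always_eventually allI less_imp_le) blast
    show "\<forall>\<^sub>F n in sequentially. r n \<le> x + 1 / real (Suc n)"
      using r by (intro always_eventually allI less_imp_le) blast
  qed
  moreover have "\<forall>\<^sub>F n in sequentially. r n \<in> {0..}"
    using r x by (intro always_eventually allI) (auto intro: order_trans less_imp_le)
  ultimately have "(\<lambda>n. f (r n)) \<longlonglongrightarrow> f x"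
    using continuous_on_tendsto_compose[OF c, of r x sequentially] x by (simp add: o_def)
  moreover have "\<forall>\<^sub>F n in sequentially. f (r n) \<le> 0" using r q by (intro always_eventually allI) blast
  ultimately show ?thesis by (rule tendsto_upperbound) simp
qed

locale stoch =
  fixes M :: "'a measure"
    and F :: "('i::finite \<Rightarrow> nat) \<Rightarrow> 'a measure"
    and \<beta> :: real
    and h :: "'i \<Rightarrow> nat \<Rightarrow> 'a \<Rightarrow> real"
    and V :: "'i \<Rightarrow> nat \<Rightarrow> real \<Rightarrow> 'a \<Rightarrow> real"
  assumes prob: "prob_space M"
    and compl: "complete_measure M"
    and beta: "0 < \<beta>" "\<beta> < 1"
    and subalg: "\<And>r. subalgebra M (F r)"
    and F1: "\<And>r q. r \<le> q \<Longrightarrow> sets (F r) \<subseteq> sets (F q)"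
    and h_pos: "\<And>i t \<omega>. 1 \<le> t \<Longrightarrow> \<omega> \<in> space M \<Longrightarrow> 0 < h i t \<omega>"
    and h_decr: "\<And>i t \<omega>. 1 \<le> t \<Longrightarrow> \<omega> \<in> space M \<Longrightarrow> h i (Suc t) \<omega> \<le> h i t \<omega>"
    and h_bdd: "\<exists>B. \<forall>i t. \<forall>\<omega>\<in>space M. 1 \<le> t \<longrightarrow> h i t \<omega> \<le> B"
    and h_pred: "\<And>i t. 1 \<le> t \<Longrightarrow> h i t \<in> borel_measurable (F (tvec (t - 1) i))"
    and V_ess: "\<And>i t m. 0 \<le> m \<Longrightarrow>
       is_ess_sup M {real_cond_exp M (F (tvec t i)) (payoff \<beta> h i t m \<tau>) | \<tau>. \<tau> \<in> stop_times M F i t}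
         (V i t m)"
    and V_cont: "\<And>i t \<omega>. \<omega> \<in> space M \<Longrightarrow> continuous_on {0..} (\<lambda>m. V i t m \<omega>)"
begin

interpretation P: prob_space M by (rule prob)

lemma sfs: "sigma_finite_subalgebra M (F r)"
proof -
  have "finite_measure_subalgebra M (F r)"
    unfolding finite_measure_subalgebra_def finite_measure_subalgebra_axioms_def
    using subalg P.finite_measure_axioms by blast
  then show ?thesis by (rule finite_measure_subalgebra_is_sigma_finite)
qed

lemma space_F: "space (F r) = space M" using subalg[of r] by (simp add: subalgebra_def)
lemma sets_F: "sets (F r) \<subseteq> sets M" using subalg[of r] by (simp add: subalgebra_def)

lemma subalgF: "r \<le> q \<Longrightarrow> subalgebra (F q) (F r)"
  unfolding subalgebra_def using F1 space_F by auto

lemma h_measF: "1 \<le> n \<Longrightarrow> tvec (n-1) i \<le> r \<Longrightarrow> h i n \<in> borel_measurable (F r)"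
  using measurable_from_subalg[OF subalgF h_pred] by blast

lemma h_meas: "1 \<le> n \<Longrightarrow> h i n \<in> borel_measurable M"
  using measurable_from_subalg[OF subalg h_pred] by blast

lemma tvec_le: "tvec (r i) i \<le> r"
  unfolding tvec_def le_fun_def by auto

definition Bd where "Bd = (SOME B. \<forall>i t. \<forall>\<omega>\<in>space M. 1 \<le> t \<longrightarrow> h i t \<omega> \<le> B)"

lemma Bd: "\<forall>i t. \<forall>\<omega>\<in>space M. 1 \<le> t \<longrightarrow> h i t \<omega> \<le> Bd"
  unfolding Bd_def using h_bdd by (rule someI_ex)

lemma pathw: "\<omega> \<in> space M \<Longrightarrow> path \<beta> (\<lambda>i n. h i n \<omega>) Bd"
  by unfold_locales (use beta h_pos h_decr Bd in auto)


lemma stop_const: "\<theta> \<le> n \<Longrightarrow> (\<lambda>_. enat n) \<in> stop_times M F i \<theta>"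
proof -
  assume tn: "\<theta> \<le> n"
  have A: "{\<omega> \<in> space M. enat n \<le> enat u} \<in> sets (F (tvec u i))" for u
  proof (cases "n \<le> u")
    case True
    then have "{\<omega> \<in> space M. enat n \<le> enat u} = space (F (tvec u i))" using space_F[of "tvec u i"] by simp
    then show ?thesis using sets.top[of "F (tvec u i)"] by metis
  next
    case False
    then have "{\<omega> \<in> space M. enat n \<le> enat u} = {}" by simp
    then show ?thesis using sets.empty_sets[of "F (tvec u i)"] by metis
  qed
  show ?thesis unfolding stop_times_def mem_Collect_eq
  proof (intro conjI allI ballI)
    show "enat \<theta> \<le> enat n" for \<omega> using tn by simp
    show "{\<omega> \<in> space M. enat n \<le> enat u} \<in> sets (F (tvec u i))" for u by (rule A)
  qed
qed

lemma payoff0: "payoff \<beta> h i \<theta> m (\<lambda>_. enat \<theta>) \<omega> = m"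
proof -
  have "(\<lambda>u. if \<theta> \<le> u \<and> enat u < enat \<theta> then \<beta>^(u-\<theta>) * h i (u+1) \<omega> else 0) = (\<lambda>u. 0)"
    by auto
  then show ?thesis by (simp add: payoff_def epow_def)
qed

lemma payoff1: "payoff \<beta> h i \<theta> m (\<lambda>_. enat (Suc \<theta>)) \<omega> = h i (Suc \<theta>) \<omega> + m * \<beta>"
proof -
  have "(\<lambda>u. if \<theta> \<le> u \<and> enat u < enat (Suc \<theta>) then \<beta>^(u-\<theta>) * h i (u+1) \<omega> else 0) =
        (\<lambda>u. if u = \<theta> then h i (Suc \<theta>) \<omega> else 0)" by (auto simp: fun_eq_iff)
  moreover have "(\<Sum>u. if u = \<theta> then h i (Suc \<theta>) \<omega> else 0) = h i (Suc \<theta>) \<omega>"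
    using sums_unique[OF sums_single[of \<theta> "\<lambda>_. h i (Suc \<theta>) \<omega>"]] by simp
  ultimately show ?thesis by (simp add: payoff_def epow_def)
qed

lemma enat_eq_aux: "(x = enat n) \<longleftrightarrow> (x \<le> enat n \<and> \<not>(\<exists>u<n. x \<le> enat u))" for x :: enat
proof (cases x)
  case (enat k)
  show ?thesis unfolding enat by (auto simp: le_less)
qed simp

lemma enat_inf_aux: "(x = \<infinity>) \<longleftrightarrow> \<not>(\<exists>u. x \<le> enat u)" for x :: enat
  by (cases x) auto

lemma tau_meas: assumes \<tau>: "\<tau> \<in> stop_times M F i \<theta>" shows "\<tau> \<in> measurable M (count_space UNIV)"
proof -
  have le: "{\<omega> \<in> space M. \<tau> \<omega> \<le> enat u} \<in> sets M" for u using \<tau> sets_F unfolding stop_times_def by blast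
  show ?thesis unfolding measurable_count_space_eq2_countable
  proof (intro conjI ballI)
    show "\<tau> \<in> space M \<rightarrow> UNIV" by simp
    fix e :: enat show "\<tau> -` {e} \<inter> space M \<in> sets M"
    proof (cases e)
      case (enat n)
      have "\<tau> -` {e} \<inter> space M = {\<omega>\<in>space M. \<tau> \<omega> \<le> enat n} - (\<Union>u\<in>{..<n}. {\<omega>\<in>space M. \<tau> \<omega> \<le> enat u})"
      proof -
        have "\<tau> \<omega> = enat n \<longleftrightarrow> (\<tau> \<omega> \<le> enat n \<and> \<not>(\<exists>u<n. \<tau> \<omega> \<le> enat u))" for \<omega>
          by (rule enat_eq_aux)
        then show ?thesis using enat by auto
      qed
      then show ?thesis using le by auto
    next
      case infinity
      have "\<tau> -` {e} \<inter> space M = space M - (\<Union>u. {\<omega>\<in>space M. \<tau> \<omega> \<le> enat u})"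
      proof -
        have "\<tau> \<omega> = \<infinity> \<longleftrightarrow> \<not>(\<exists>u. \<tau> \<omega> \<le> enat u)" for \<omega>
          by (rule enat_inf_aux)
        then show ?thesis using infinity by auto
      qed
      then show ?thesis using le by auto
    qed
  qed
qed

lemma payoff_meas: assumes \<tau>: "\<tau> \<in> stop_times M F i \<theta>"
  shows "payoff \<beta> h i \<theta> m \<tau> \<in> borel_measurable M"
proof -
  define \<Phi> where "\<Phi> e \<omega> = (\<Sum>u. if \<theta> \<le> u \<and> enat u < e then \<beta>^(u-\<theta>) * h i (u+1) \<omega> else 0) + m * epow \<beta> (e - enat \<theta>)"
    for e \<omega>
  have eq: "payoff \<beta> h i \<theta> m \<tau> = (\<lambda>\<omega>. \<Phi> (\<tau> \<omega>) \<omega>)" unfolding payoff_def \<Phi>_def by (rule ext) simp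
  have tm: "(\<lambda>\<omega>. if \<theta> \<le> u \<and> enat u < e then \<beta>^(u-\<theta>) * h i (u+1) \<omega> else 0) \<in> borel_measurable M" for u e
    using h_meas[of "u+1" i] by (cases "\<theta> \<le> u \<and> enat u < e") auto
  have "\<Phi> e \<in> borel_measurable M" for e
    unfolding \<Phi>_def by (intro borel_measurable_add borel_measurable_suminf tm borel_measurable_const)
  then show ?thesis unfolding eq by (rule measurable_compose_countable[OF _ tau_meas[OF \<tau>]])
qed

lemma payoff_bound: assumes \<tau>: "\<tau> \<in> stop_times M F i \<theta>" and m: "0 \<le> m" and w: "\<omega> \<in> space M"
  shows "0 \<le> payoff \<beta> h i \<theta> m \<tau> \<omega>" "payoff \<beta> h i \<theta> m \<tau> \<omega> \<le> Bd/(1-\<beta>) + m"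
    "h i (Suc \<theta>) \<omega> \<le> (1-\<beta>)*m \<Longrightarrow> payoff \<beta> h i \<theta> m \<tau> \<omega> \<le> m"
proof -
  interpret path \<beta> "\<lambda>i n. h i n \<omega>" s Bd by (rule pathw[OF w])
  have e: "enat \<theta> \<le> \<tau> \<omega>" using \<tau> w unfolding stop_times_def by blast
  note pb = pay_bound[OF e m, of i]
  have eqp: "payoff \<beta> h i \<theta> m \<tau> \<omega> = (\<Sum>u. if \<theta> \<le> u \<and> enat u < \<tau> \<omega> then \<beta>^(u-\<theta>) * h i (u+1) \<omega> else 0)
     + m * epow \<beta> (\<tau> \<omega> - enat \<theta>)" unfolding payoff_def ..
  show "0 \<le> payoff \<beta> h i \<theta> m \<tau> \<omega>" unfolding eqp by (rule pb(1))
  show "payoff \<beta> h i \<theta> m \<tau> \<omega> \<le> Bd/(1-\<beta>) + m" unfolding eqp by (rule pb(2))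
  show "h i (Suc \<theta>) \<omega> \<le> (1-\<beta>)*m \<Longrightarrow> payoff \<beta> h i \<theta> m \<tau> \<omega> \<le> m" unfolding eqp by (rule pb(3))
qed

lemma payoff_int: assumes \<tau>: "\<tau> \<in> stop_times M F i \<theta>" and m: "0 \<le> m"
  shows "integrable M (payoff \<beta> h i \<theta> m \<tau>)"
proof (rule P.integrable_const_bound[where B="Bd/(1-\<beta>) + m"])
  show "AE x in M. norm (payoff \<beta> h i \<theta> m \<tau> x) \<le> Bd/(1-\<beta>) + m"
    using payoff_bound[OF \<tau> m] by (intro AE_I2) auto
qed (rule payoff_meas[OF \<tau>])


lemma Bd_pos: "0 < Bd"
proof -
  obtain \<omega> where w: "\<omega> \<in> space M" using P.not_empty by blast
  have "0 < h undefined 1 \<omega>" using h_pos[of 1 \<omega> undefined] w by simp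
  moreover have "h undefined 1 \<omega> \<le> Bd" using Bd w by simp
  ultimately show ?thesis by linarith
qed

lemma V_meas: "0 \<le> m \<Longrightarrow> V i t m \<in> borel_measurable M"
  using V_ess[where i=i and t=t and m=m] unfolding is_ess_sup_def by blast

lemma V_ge: "0 \<le> m \<Longrightarrow> \<tau> \<in> stop_times M F i t \<Longrightarrow>
    AE \<omega> in M. real_cond_exp M (F (tvec t i)) (payoff \<beta> h i t m \<tau>) \<omega> \<le> V i t m \<omega>"
  using V_ess[where i=i and t=t and m=m] unfolding is_ess_sup_def by blast

lemma V_le: "0 \<le> m \<Longrightarrow> Z \<in> borel_measurable M \<Longrightarrow>
    (\<And>\<tau>. \<tau> \<in> stop_times M F i t \<Longrightarrow> AE \<omega> in M. real_cond_exp M (F (tvec t i)) (payoff \<beta> h i t m \<tau>) \<omega> \<le> Z \<omega>)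
    \<Longrightarrow> AE \<omega> in M. V i t m \<omega> \<le> Z \<omega>"
  using V_ess[where i=i and t=t and m=m] unfolding is_ess_sup_def by blast

lemma V_fixed:
  assumes m: "0 \<le> m"
  shows "AE \<omega> in M. m \<le> V i \<theta> m \<omega> \<and> h i (Suc \<theta>) \<omega> + \<beta>*m \<le> V i \<theta> m \<omega>
     \<and> (h i (Suc \<theta>) \<omega> \<le> (1-\<beta>)*m \<longrightarrow> V i \<theta> m \<omega> \<le> m)"
proof -
  define G where "G = F (tvec \<theta> i)"
  interpret S: sigma_finite_subalgebra M G unfolding G_def by (rule sfs)
  have hG[measurable]: "h i (Suc \<theta>) \<in> borel_measurable G" unfolding G_def using h_pred[of "Suc \<theta>" i] by simp
  have hM[measurable]: "h i (Suc \<theta>) \<in> borel_measurable M" by (rule h_meas) simp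
  have hb: "\<omega> \<in> space M \<Longrightarrow> 0 < h i (Suc \<theta>) \<omega> \<and> h i (Suc \<theta>) \<omega> \<le> Bd" for \<omega> using h_pos Bd by auto
  have a1: "AE \<omega> in M. real_cond_exp M G (payoff \<beta> h i \<theta> m (\<lambda>_. enat \<theta>)) \<omega> = m"
  proof -
    have "payoff \<beta> h i \<theta> m (\<lambda>_. enat \<theta>) = (\<lambda>_. m)" by (rule ext) (rule payoff0)
    moreover have "AE \<omega> in M. real_cond_exp M G (\<lambda>_. m) \<omega> = m" by (rule S.real_cond_exp_F_meas) auto
    ultimately show ?thesis by simp
  qed
  have a2: "AE \<omega> in M. real_cond_exp M G (payoff \<beta> h i \<theta> m (\<lambda>_. enat \<theta>)) \<omega> \<le> V i \<theta> m \<omega>"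
    unfolding G_def by (rule V_ge[OF m stop_const]) simp
  have b1: "AE \<omega> in M. real_cond_exp M G (payoff \<beta> h i \<theta> m (\<lambda>_. enat (Suc \<theta>))) \<omega> = h i (Suc \<theta>) \<omega> + m * \<beta>"
  proof -
    have "payoff \<beta> h i \<theta> m (\<lambda>_. enat (Suc \<theta>)) = (\<lambda>\<omega>. h i (Suc \<theta>) \<omega> + m * \<beta>)" by (rule ext) (rule payoff1)
    moreover have "AE \<omega> in M. real_cond_exp M G (\<lambda>\<omega>. h i (Suc \<theta>) \<omega> + m * \<beta>) \<omega> = h i (Suc \<theta>) \<omega> + m * \<beta>"
    proof (rule S.real_cond_exp_F_meas)
      show "integrable M (\<lambda>\<omega>. h i (Suc \<theta>) \<omega> + m * \<beta>)"
      proof (rule P.integrable_const_bound[where B="Bd + m * \<beta>"])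
        show "AE x in M. norm (h i (Suc \<theta>) x + m * \<beta>) \<le> Bd + m * \<beta>"
        proof (rule AE_I2)
          fix x assume x: "x \<in> space M"
          have "0 \<le> m * \<beta>" using m beta by simp
          then show "norm (h i (Suc \<theta>) x + m * \<beta>) \<le> Bd + m * \<beta>" using hb[OF x] by simp
        qed
      qed measurable
    qed measurable
    ultimately show ?thesis by simp
  qed
  have b2: "AE \<omega> in M. real_cond_exp M G (payoff \<beta> h i \<theta> m (\<lambda>_. enat (Suc \<theta>))) \<omega> \<le> V i \<theta> m \<omega>"
    unfolding G_def by (rule V_ge[OF m stop_const]) simp
  define Z where "Z \<omega> = (if h i (Suc \<theta>) \<omega> \<le> (1-\<beta>)*m then m else V i \<theta> m \<omega>)" for \<omega>
  have VM[measurable]: "V i \<theta> m \<in> borel_measurable M" by (rule V_meas[OF m])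
  have ZM: "Z \<in> borel_measurable M" unfolding Z_def by measurable
  have c1: "AE \<omega> in M. real_cond_exp M G (payoff \<beta> h i \<theta> m \<tau>) \<omega> \<le> Z \<omega>" if \<tau>: "\<tau> \<in> stop_times M F i \<theta>" for \<tau>
  proof -
    define \<psi> where "\<psi> = payoff \<beta> h i \<theta> m \<tau>"
    have \<psi>M[measurable]: "\<psi> \<in> borel_measurable M" unfolding \<psi>_def by (rule payoff_meas[OF \<tau>])
    have \<psi>b: "\<omega> \<in> space M \<Longrightarrow> 0 \<le> \<psi> \<omega> \<and> \<psi> \<omega> \<le> Bd/(1-\<beta>) + m" for \<omega>
      unfolding \<psi>_def using payoff_bound[OF \<tau> m] by auto
    have \<psi>c: "\<omega> \<in> space M \<Longrightarrow> h i (Suc \<theta>) \<omega> \<le> (1-\<beta>)*m \<Longrightarrow> \<psi> \<omega> \<le> m" for \<omega>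
      unfolding \<psi>_def using payoff_bound[OF \<tau> m] by auto
    define f where "f \<omega> = (if h i (Suc \<theta>) \<omega> \<le> (1-\<beta>)*m then 1 else 0::real)" for \<omega>
    have fG[measurable]: "f \<in> borel_measurable G" unfolding f_def by measurable
    have fM[measurable]: "f \<in> borel_measurable M" unfolding f_def by measurable
    have i1: "integrable M (\<lambda>x. f x * \<psi> x)"
    proof (rule P.integrable_const_bound[where B="Bd/(1-\<beta>) + m"])
      show "AE x in M. norm (f x * \<psi> x) \<le> Bd/(1-\<beta>) + m"
        using \<psi>b m beta Bd_pos by (intro AE_I2) (auto simp: f_def abs_of_nonneg)
    qed measurable
    have i2: "integrable M (\<lambda>x. f x * m)"
    proof (rule P.integrable_const_bound[where B="m"])
      show "AE x in M. norm (f x * m) \<le> m" using m by (intro AE_I2) (auto simp: f_def)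
    qed measurable
    have A1: "AE x in M. real_cond_exp M G (\<lambda>x. f x * \<psi> x) x = f x * real_cond_exp M G \<psi> x"
      by (rule S.real_cond_exp_mult[OF fG \<psi>M i1])
    have A2: "AE x in M. real_cond_exp M G (\<lambda>x. f x * m) x = f x * m"
      by (rule S.real_cond_exp_F_meas[OF i2]) measurable
    have A3: "AE x in M. real_cond_exp M G (\<lambda>x. f x * \<psi> x) x \<le> real_cond_exp M G (\<lambda>x. f x * m) x"
    proof (rule S.real_cond_exp_mono[OF _ i1 i2])
      show "AE x in M. f x * \<psi> x \<le> f x * m" using \<psi>c by (intro AE_I2) (auto simp: f_def)
    qed
    have A4: "AE x in M. real_cond_exp M G \<psi> x \<le> V i \<theta> m x"
      unfolding \<psi>_def G_def by (rule V_ge[OF m \<tau>])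
    show ?thesis using A1 A2 A3 A4 unfolding \<psi>_def[symmetric]
      by eventually_elim (auto simp: Z_def f_def split: if_splits)
  qed
  have c2: "AE \<omega> in M. V i \<theta> m \<omega> \<le> Z \<omega>"
    by (rule V_le[OF m ZM]) (use c1 G_def in simp)
  show ?thesis using a1 a2 b1 b2 c2
    by eventually_elim (auto simp: Z_def mult.commute split: if_splits)
qed


lemma V_all: "AE \<omega> in M. \<forall>i \<theta> m. 0 \<le> m \<longrightarrow> (V i \<theta> m \<omega> = m \<longleftrightarrow> h i (Suc \<theta>) \<omega> \<le> (1-\<beta>)*m)"
proof -
  let ?Q = "{q \<in> \<rat>. (0::real) \<le> q}"
  have cQ: "countable ?Q" by (rule countable_subset[OF _ countable_rat]) auto
  have "AE \<omega> in M. \<forall>i. \<forall>\<theta>. \<forall>q\<in>?Q. q \<le> V i \<theta> q \<omega> \<and> h i (Suc \<theta>) \<omega> + \<beta>*q \<le> V i \<theta> q \<omega>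
     \<and> (h i (Suc \<theta>) \<omega> \<le> (1-\<beta>)*q \<longrightarrow> V i \<theta> q \<omega> \<le> q)"
    unfolding AE_all_countable AE_ball_countable[OF cQ] using V_fixed by auto
  then show ?thesis
  proof (rule AE_mp[OF _ AE_I2[OF impI]])
    fix \<omega> assume w: "\<omega> \<in> space M" and H: "\<forall>i. \<forall>\<theta>. \<forall>q\<in>?Q. q \<le> V i \<theta> q \<omega> \<and> h i (Suc \<theta>) \<omega> + \<beta>*q \<le> V i \<theta> q \<omega>
     \<and> (h i (Suc \<theta>) \<omega> \<le> (1-\<beta>)*q \<longrightarrow> V i \<theta> q \<omega> \<le> q)"
    show "\<forall>i \<theta> m. 0 \<le> m \<longrightarrow> (V i \<theta> m \<omega> = m \<longleftrightarrow> h i (Suc \<theta>) \<omega> \<le> (1-\<beta>)*m)"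
    proof (intro allI impI)
      fix i \<theta> and m :: real assume m: "0 \<le> m"
      have cV: "continuous_on {0..} (\<lambda>m. V i \<theta> m \<omega>)" by (rule V_cont[OF w])
      have c1: "m - V i \<theta> m \<omega> \<le> 0"
      proof (rule cont_rat[where f="\<lambda>m. m - V i \<theta> m \<omega>", OF _ m])
        show "continuous_on {0..} (\<lambda>m. m - V i \<theta> m \<omega>)" by (intro continuous_intros cV)
        fix q :: real assume "q \<in> \<rat>" "m < q"
        then show "q - V i \<theta> q \<omega> \<le> 0" using H m by auto
      qed
      have c2: "h i (Suc \<theta>) \<omega> + \<beta>*m - V i \<theta> m \<omega> \<le> 0"
      proof (rule cont_rat[where f="\<lambda>m. h i (Suc \<theta>) \<omega> + \<beta>*m - V i \<theta> m \<omega>", OF _ m])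
        show "continuous_on {0..} (\<lambda>m. h i (Suc \<theta>) \<omega> + \<beta>*m - V i \<theta> m \<omega>)" by (intro continuous_intros cV)
        fix q :: real assume "q \<in> \<rat>" "m < q"
        then show "h i (Suc \<theta>) \<omega> + \<beta>*q - V i \<theta> q \<omega> \<le> 0" using H m by force
      qed
      have c3: "V i \<theta> m \<omega> - m \<le> 0" if A: "h i (Suc \<theta>) \<omega> \<le> (1-\<beta>)*m"
      proof (rule cont_rat[where f="\<lambda>m. V i \<theta> m \<omega> - m", OF _ m])
        show "continuous_on {0..} (\<lambda>m. V i \<theta> m \<omega> - m)" by (intro continuous_intros cV)
        fix q :: real assume q: "q \<in> \<rat>" "m < q"
        have "(1-\<beta>)*m \<le> (1-\<beta>)*q" using q beta by (intro mult_left_mono) auto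
        then have "h i (Suc \<theta>) \<omega> \<le> (1-\<beta>)*q" using A by linarith
        then show "V i \<theta> q \<omega> - q \<le> 0" using H q m by force
      qed
      show "V i \<theta> m \<omega> = m \<longleftrightarrow> h i (Suc \<theta>) \<omega> \<le> (1-\<beta>)*m"
      proof
        assume "V i \<theta> m \<omega> = m"
        then show "h i (Suc \<theta>) \<omega> \<le> (1-\<beta>)*m" using c2 by (simp add: algebra_simps)
      next
        assume "h i (Suc \<theta>) \<omega> \<le> (1-\<beta>)*m"
        then show "V i \<theta> m \<omega> = m" using c1 c3 by simp
      qed
    qed
  qed
qed

end

context path begin
lemma rew_bound: assumes P: "ispath s p" shows "0 \<le> rew \<beta> a p" "rew \<beta> a p \<le> B/(1-\<beta>)"
proof -
  have y: "0 \<le> \<beta>^t * yv a p t" "\<beta>^t * yv a p t \<le> B * \<beta>^t" for t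
    using yv_pos[OF P, of t] yv_bdd[OF P, of t] beta0 by (auto simp: mult.commute mult_left_mono)
  show "0 \<le> rew \<beta> a p" unfolding rew_eq[OF P] by (intro suminf_nonneg summable_yv[OF P] y)
  have sg: "summable (\<lambda>t. B * \<beta>^t)" using beta0 beta1 by (intro summable_mult summable_geometric) auto
  have "rew \<beta> a p \<le> (\<Sum>t. B * \<beta>^t)" unfolding rew_eq[OF P] by (intro suminf_le summable_yv[OF P] sg y)
  also have "\<dots> = B * (1/(1-\<beta>))" using beta0 beta1 by (simp add: suminf_mult suminf_geometric)
  finally show "rew \<beta> a p \<le> B/(1-\<beta>)" by simp
qed
end

context stoch begin

interpretation P: prob_space M by (rule prob)

lemma alloc_path: "T \<in> alloc M F s \<Longrightarrow> \<omega> \<in> space M \<Longrightarrow> ispath s (\<lambda>t. T t \<omega>)"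
  unfolding alloc_def ispath_def by auto

lemma alloc_Tmeas: assumes T: "T \<in> alloc M F s" shows "T t \<in> measurable M (count_space UNIV)"
  unfolding measurable_count_space_eq2_countable
proof (intro conjI ballI)
  show "T t \<in> space M \<rightarrow> UNIV" by simp
  fix r
  have A: "{\<omega>\<in>space M. T (Suc t) \<omega> = (\<lambda>k. T t \<omega> k + unitv j k) \<and> T t \<omega> = r} \<in> sets M" for j
    using T sets_F unfolding alloc_def by blast
  have "T t -` {r} \<inter> space M = (\<Union>j. {\<omega>\<in>space M. T (Suc t) \<omega> = (\<lambda>k. T t \<omega> k + unitv j k) \<and> T t \<omega> = r})"
    using T unfolding alloc_def by blast
  also have "\<dots> \<in> sets M" using A by (intro sets.countable_UN) auto
  finally show "T t -` {r} \<inter> space M \<in> sets M" .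
qed

lemma reward_path: "reward \<beta> h T \<omega> = rew \<beta> (\<lambda>i n. h i n \<omega>) (\<lambda>t. T t \<omega>)"
  by (simp add: reward_def rew_def)

lemma reward_meas: assumes T: "T \<in> alloc M F s" shows "reward \<beta> h T \<in> borel_measurable M"
proof -
  define hh where "hh i n \<omega> = (if n = 0 then 0 else h i n \<omega>)" for i n \<omega>
  have hhm: "hh i n \<in> borel_measurable M" for i n
  proof -
    have "hh i n = (if n = 0 then (\<lambda>\<omega>. 0) else h i n)" by (auto simp: hh_def fun_eq_iff)
    then show ?thesis using h_meas[of n i] by simp
  qed
  define \<Phi> where "\<Phi> t i r' r \<omega> = \<beta>^t * hh i (r' i) \<omega> * real (r' i - (r::'i\<Rightarrow>nat) i)" for t i and r' r :: "'i \<Rightarrow> nat" and \<omega>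
  have trm: "\<beta> ^ t * h i (T (Suc t) \<omega> i) \<omega> * real (T (Suc t) \<omega> i - T t \<omega> i) = \<Phi> t i (T (Suc t) \<omega>) (T t \<omega>) \<omega>"
    for t i \<omega> by (cases "T (Suc t) \<omega> i") (auto simp: \<Phi>_def hh_def)
  have "(\<lambda>\<omega>. \<Phi> t i r' (T t \<omega>) \<omega>) \<in> borel_measurable M" for t i r'
    by (rule measurable_compose_countable[OF _ alloc_Tmeas[OF T]])
      (unfold \<Phi>_def, intro borel_measurable_times borel_measurable_const hhm)
  then have "(\<lambda>\<omega>. \<Phi> t i (T (Suc t) \<omega>) (T t \<omega>) \<omega>) \<in> borel_measurable M" for t i
    by (rule measurable_compose_countable[OF _ alloc_Tmeas[OF T]])
  then show ?thesis unfolding reward_def trm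
    by (intro borel_measurable_sum borel_measurable_suminf)
qed

lemma reward_bound: "T \<in> alloc M F s \<Longrightarrow> \<omega> \<in> space M \<Longrightarrow> 0 \<le> reward \<beta> h T \<omega> \<and> reward \<beta> h T \<omega> \<le> Bd/(1-\<beta>)"
proof -
  assume T: "T \<in> alloc M F s" and w: "\<omega> \<in> space M"
  interpret path \<beta> "\<lambda>i n. h i n \<omega>" s Bd by (rule pathw[OF w])
  show ?thesis unfolding reward_path using rew_bound[OF alloc_path[OF T w]] by simp
qed

lemma reward_int: "T \<in> alloc M F s \<Longrightarrow> integrable M (reward \<beta> h T)"
proof -
  assume T: "T \<in> alloc M F s"
  show ?thesis
  proof (rule P.integrable_const_bound[where B="Bd/(1-\<beta>)"])
    show "AE x in M. norm (reward \<beta> h T x) \<le> Bd/(1-\<beta>)"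
      using reward_bound[OF T] by (intro AE_I2) auto
  qed (rule reward_meas[OF T])
qed


definition Tg :: "('i \<Rightarrow> nat) \<Rightarrow> nat \<Rightarrow> 'a \<Rightarrow> 'i \<Rightarrow> nat" where
  "Tg s t \<omega> = gp (\<lambda>i n. h i n \<omega>) s t"

lemma gsel_meas: "(\<lambda>\<omega>. gsel (\<lambda>i n. h i n \<omega>) r) \<in> measurable (F r) (count_space UNIV)"
proof -
  define Mx where "Mx \<omega> = {j. \<forall>k. h k (Suc (r k)) \<omega> \<le> h j (Suc (r j)) \<omega>}" for \<omega>
  have hm[measurable]: "h k (Suc (r k)) \<in> borel_measurable (F r)" for k
    by (rule h_measF) (simp_all add: tvec_le)
  have "Mx \<in> measurable (F r) (count_space UNIV)"
    unfolding measurable_count_space_eq2_countable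
  proof (intro conjI ballI)
    fix S :: "'i set"
    have "Mx -` {S} \<inter> space (F r) = {\<omega> \<in> space (F r). \<forall>j. (\<forall>k. h k (Suc (r k)) \<omega> \<le> h j (Suc (r j)) \<omega>) \<longleftrightarrow> j \<in> S}"
      unfolding Mx_def by auto
    also have "\<dots> \<in> sets (F r)" by measurable
    finally show "Mx -` {S} \<inter> space (F r) \<in> sets (F r)" .
  qed simp
  then have "(\<lambda>\<omega>. (\<lambda>S. SOME j. j \<in> S) (Mx \<omega>)) \<in> measurable (F r) (count_space UNIV)"
    by (rule measurable_compose) (rule measurable_count_space)
  then show ?thesis unfolding gsel_def Mx_def .
qed

lemma gsel_sets: "{\<omega> \<in> space M. gsel (\<lambda>i n. h i n \<omega>) r = j} \<in> sets (F r)"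
proof -
  have "(\<lambda>\<omega>. gsel (\<lambda>i n. h i n \<omega>) r) -` {j} \<inter> space (F r) \<in> sets (F r)"
    by (rule measurable_sets[OF gsel_meas]) simp
  moreover have "(\<lambda>\<omega>. gsel (\<lambda>i n. h i n \<omega>) r) -` {j} \<inter> space (F r) = {\<omega> \<in> space M. gsel (\<lambda>i n. h i n \<omega>) r = j}"
    using space_F by auto
  ultimately show ?thesis by simp
qed

lemma FsubF: "r \<le> q \<Longrightarrow> A \<in> sets (F r) \<Longrightarrow> A \<in> sets (F q)" using F1 by blast

lemma Tg_sets: "{\<omega> \<in> space M. Tg s t \<omega> = r} \<in> sets (F r)"
proof (induction t arbitrary: r)
  case 0
  show ?case
  proof (cases "s = r")
    case True
    then have "{\<omega> \<in> space M. Tg s 0 \<omega> = r} = space (F r)" using space_F by (simp add: Tg_def)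
    then show ?thesis by simp
  next
    case False
    then have "{\<omega> \<in> space M. Tg s 0 \<omega> = r} = {}" by (simp add: Tg_def)
    then show ?thesis by (metis sets.empty_sets)
  qed
next
  case (Suc t)
  define r' where "r' j = r(j := r j - 1)" for j
  have eq: "{\<omega> \<in> space M. Tg s (Suc t) \<omega> = r} =
    (\<Union>j\<in>{j. 1 \<le> r j}. {\<omega> \<in> space M. Tg s t \<omega> = r' j} \<inter> {\<omega> \<in> space M. gsel (\<lambda>i n. h i n \<omega>) (r' j) = j})"
  proof (intro set_eqI iffI)
    fix \<omega> assume "\<omega> \<in> {\<omega> \<in> space M. Tg s (Suc t) \<omega> = r}"
    then have w: "\<omega> \<in> space M" and E: "(\<lambda>k. Tg s t \<omega> k + unitv (gsel (\<lambda>i n. h i n \<omega>) (Tg s t \<omega>)) k) = r"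
      by (auto simp: Tg_def)
    define j where "j = gsel (\<lambda>i n. h i n \<omega>) (Tg s t \<omega>)"
    have rj: "1 \<le> r j" using E[THEN fun_cong, of j] by (simp add: j_def unitv_def)
    have Tr: "Tg s t \<omega> = r' j"
    proof (rule ext)
      fix k have "Tg s t \<omega> k + unitv j k = r k" using E[THEN fun_cong, of k] j_def by simp
      then show "Tg s t \<omega> k = r' j k" by (auto simp: r'_def unitv_def split: if_splits)
    qed
    show "\<omega> \<in> (\<Union>j\<in>{j. 1 \<le> r j}. {\<omega> \<in> space M. Tg s t \<omega> = r' j} \<inter> {\<omega> \<in> space M. gsel (\<lambda>i n. h i n \<omega>) (r' j) = j})"
    proof (rule UN_I[of j])
      have g: "gsel (\<lambda>i n. h i n \<omega>) (r' j) = j" using j_def unfolding Tr by (rule sym)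
      show "j \<in> {j. 1 \<le> r j}" using rj by simp
      show "\<omega> \<in> {\<omega> \<in> space M. Tg s t \<omega> = r' j} \<inter> {\<omega> \<in> space M. gsel (\<lambda>i n. h i n \<omega>) (r' j) = j}"
        using w Tr g by simp
    qed
  next
    fix \<omega> assume "\<omega> \<in> (\<Union>j\<in>{j. 1 \<le> r j}. {\<omega> \<in> space M. Tg s t \<omega> = r' j} \<inter> {\<omega> \<in> space M. gsel (\<lambda>i n. h i n \<omega>) (r' j) = j})"
    then obtain j where j: "1 \<le> r j" "\<omega> \<in> space M" "Tg s t \<omega> = r' j" "gsel (\<lambda>i n. h i n \<omega>) (r' j) = j" by auto
    have "Tg s (Suc t) \<omega> = (\<lambda>k. Tg s t \<omega> k + unitv (gsel (\<lambda>i n. h i n \<omega>) (Tg s t \<omega>)) k)" by (simp add: Tg_def)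
    also have "\<dots> = (\<lambda>k. r' j k + unitv j k)" using j(3) j(4) by simp
    also have "\<dots> = r" using j(1) by (auto simp: r'_def unitv_def fun_eq_iff)
    finally show "\<omega> \<in> {\<omega> \<in> space M. Tg s (Suc t) \<omega> = r}" using j by simp
  qed
  have "{\<omega> \<in> space M. Tg s t \<omega> = r' j} \<inter> {\<omega> \<in> space M. gsel (\<lambda>i n. h i n \<omega>) (r' j) = j} \<in> sets (F r)" for j
  proof -
    have le: "r' j \<le> r" by (auto simp: r'_def le_fun_def)
    show ?thesis using FsubF[OF le Suc.IH] FsubF[OF le gsel_sets] by blast
  qed
  then show ?case unfolding eq by (intro sets.finite_UN) auto
qed

lemma Tg_alloc: "Tg s \<in> alloc M F s"
  unfolding alloc_def
proof (intro CollectI conjI allI ballI)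
  show "Tg s 0 \<omega> = s" for \<omega> by (simp add: Tg_def)
  show "\<exists>j. Tg s (Suc t) \<omega> = (\<lambda>k. Tg s t \<omega> k + unitv j k)" for t \<omega> by (auto simp: Tg_def)
  fix t j r
  have "{\<omega> \<in> space M. Tg s (Suc t) \<omega> = (\<lambda>k. Tg s t \<omega> k + unitv j k) \<and> Tg s t \<omega> = r} =
        {\<omega> \<in> space M. Tg s t \<omega> = r} \<inter> {\<omega> \<in> space M. gsel (\<lambda>i n. h i n \<omega>) r = j}"
  proof -
    have "Tg s (Suc t) \<omega> = (\<lambda>k. Tg s t \<omega> k + unitv j k) \<longleftrightarrow> gsel (\<lambda>i n. h i n \<omega>) (Tg s t \<omega>) = j" for \<omega>
      by (auto simp: Tg_def dest: unitv_inj)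
    then show ?thesis by auto
  qed
  then show "{\<omega> \<in> space M. Tg s (Suc t) \<omega> = (\<lambda>k. Tg s t \<omega> k + unitv j k) \<and> Tg s t \<omega> = r} \<in> sets (F r)"
    using Tg_sets gsel_sets by auto
qed

end

context stoch begin

interpretation P: prob_space M by (rule prob)

definition good where
  "good \<omega> \<longleftrightarrow> \<omega> \<in> space M \<and> (\<forall>i \<theta> m. 0 \<le> m \<longrightarrow> (V i \<theta> m \<omega> = m \<longleftrightarrow> h i (Suc \<theta>) \<omega> \<le> (1-\<beta>)*m))"

lemma AE_good: "AE \<omega> in M. good \<omega>"
  using V_all unfolding good_def by (rule AE_mp) (intro AE_I2 impI conjI)

lemma good_sigma: "good \<omega> \<Longrightarrow> 0 \<le> m \<Longrightarrow> sigma_idx V i t m \<omega> = sigma_idx (Va \<beta> (\<lambda>i n. h i n \<omega>)) i t m ()"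
proof -
  assume g: "good \<omega>" and m: "0 \<le> m"
  have "(V i \<theta> m \<omega> = m) = (Va \<beta> (\<lambda>i n. h i n \<omega>) i \<theta> m () = m)" for \<theta>
    using g m unfolding good_def Va_def by auto
  then show ?thesis unfolding sigma_idx_def by simp
qed

lemma good_tau: "good \<omega> \<Longrightarrow> 0 \<le> m \<Longrightarrow> tau_tot V m s \<omega> = Kt \<beta> (\<lambda>i n. h i n \<omega>) s m"
  unfolding tau_tot_def Kt_def using good_sigma by simp

lemma good_I: "good \<omega> \<Longrightarrow> (LBINT m:{0..}. 1 - epow \<beta> (tau_tot V m s \<omega>)) = (LBINT m:{0..}. 1 - epow \<beta> (Kt \<beta> (\<lambda>i n. h i n \<omega>) s m))"
  by (rule set_lebesgue_integral_cong) (auto simp: good_tau)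

lemma good_N: "good \<omega> \<Longrightarrow> N_idx V t s \<omega> = N_idx (Va \<beta> (\<lambda>i n. h i n \<omega>)) t s ()"
proof -
  assume g: "good \<omega>"
  have "{m. 0 \<le> m \<and> tau_tot V m s \<omega> \<le> enat t} = {m. 0 \<le> m \<and> tau_tot (Va \<beta> (\<lambda>i n. h i n \<omega>)) m s () \<le> enat t}"
    using good_tau[OF g] unfolding Kt_def by auto
  then show ?thesis unfolding N_idx_def by simp
qed

lemma good_sync: assumes g: "good \<omega>" and T: "T \<in> alloc M F s"
  shows "(\<forall>t. \<forall>m>0. (\<Sum>i\<in>UNIV. min (enat (T t \<omega> i - s i)) (sigma_idx V i (s i) m \<omega> - enat (s i)))
                  = min (enat t) (tau_tot V m s \<omega>))
     \<longleftrightarrow> (\<forall>t. \<forall>m>0. Pc \<beta> (\<lambda>i n. h i n \<omega>) (\<lambda>t. T t \<omega>) m t = Qc \<beta> (\<lambda>i n. h i n \<omega>) s m t)"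
proof -
  have w: "\<omega> \<in> space M" using g unfolding good_def by simp
  interpret path \<beta> "\<lambda>i n. h i n \<omega>" s Bd by (rule pathw[OF w])
  have "(\<Sum>i\<in>UNIV. min (enat (T t \<omega> i - s i)) (sigma_idx V i (s i) m \<omega> - enat (s i)))
                  = min (enat t) (tau_tot V m s \<omega>)
     \<longleftrightarrow> Pc \<beta> (\<lambda>i n. h i n \<omega>) (\<lambda>t. T t \<omega>) m t = Qc \<beta> (\<lambda>i n. h i n \<omega>) s m t" if m: "0 < m" for t m
    using sync_iff[OF alloc_path[OF T w], of t m] good_sigma[OF g] good_tau[OF g] m
    unfolding cnt_def by simp
  then show ?thesis by blast
qed

lemma AE_meas: assumes f: "f \<in> borel_measurable M" and ae: "AE x in M. f x = g x"
  shows "(g :: 'a \<Rightarrow> real) \<in> borel_measurable M"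
proof (rule measurableI)
  show "g x \<in> space borel" for x by simp
  fix A :: "real set" assume A: "A \<in> sets borel"
  have "AE x in M. x \<in> f -` A \<inter> space M \<longleftrightarrow> x \<in> g -` A \<inter> space M"
    using ae by (rule AE_mp) (intro AE_I2, auto)
  then show "g -` A \<inter> space M \<in> sets M"
    by (rule complete_measure.in_sets_AE[OF compl]) (use measurable_sets[OF f A] in auto)
qed


lemma main:
  shows "is_ess_sup M {real_cond_exp M (F s) (reward \<beta> h T) | T. T \<in> alloc M F s}
           (real_cond_exp M (F s) (\<lambda>\<omega>. LBINT m:{0..}. 1 - epow \<beta> (tau_tot V m s \<omega>)))
       \<and> (AE \<omega> in M. real_cond_exp M (F s) (\<lambda>\<omega>. LBINT m:{0..}. 1 - epow \<beta> (tau_tot V m s \<omega>)) \<omega>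
              = (1 - \<beta>) * real_cond_exp M (F s) (\<lambda>\<omega>. \<Sum>t. \<beta> ^ t * N_idx V t s \<omega>) \<omega>)
       \<and> (\<forall>T\<in>alloc M F s.
            (AE \<omega> in M. real_cond_exp M (F s) (reward \<beta> h T) \<omega>
                 = real_cond_exp M (F s) (\<lambda>\<omega>. LBINT m:{0..}. 1 - epow \<beta> (tau_tot V m s \<omega>)) \<omega>)
            \<longleftrightarrow> (AE \<omega> in M. \<forall>t. \<forall>m>0.
                  (\<Sum>i\<in>UNIV. min (enat (T t \<omega> i - s i)) (sigma_idx V i (s i) m \<omega> - enat (s i)))
                  = min (enat t) (tau_tot V m s \<omega>)))"
proof -
  interpret S: sigma_finite_subalgebra M "F s" by (rule sfs)
  define I where "I \<omega> = (LBINT m:{0..}. 1 - epow \<beta> (tau_tot V m s \<omega>))" for \<omega>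
  define G where "G = reward \<beta> h (Tg s)"
  define Ns where "Ns \<omega> = (\<Sum>t. \<beta> ^ t * N_idx V t s \<omega>)" for \<omega>
  define sync where "sync T \<omega> \<longleftrightarrow> (\<forall>t. \<forall>m>0.
                  (\<Sum>i\<in>UNIV. min (enat (T t \<omega> i - s i)) (sigma_idx V i (s i) m \<omega> - enat (s i)))
                  = min (enat t) (tau_tot V m s \<omega>))" for T \<omega>
  have GT: "Tg s \<in> alloc M F s" by (rule Tg_alloc)
  have Gm: "G \<in> borel_measurable M" unfolding G_def by (rule reward_meas[OF GT])
  have Gi: "integrable M G" unfolding G_def by (rule reward_int[OF GT])
  have IG: "AE \<omega> in M. G \<omega> = I \<omega>"
  proof (rule AE_mp[OF AE_good], intro AE_I2 impI)
    fix \<omega> assume g: "good \<omega>"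
    then have w: "\<omega> \<in> space M" unfolding good_def by simp
    interpret path \<beta> "\<lambda>i n. h i n \<omega>" s Bd by (rule pathw[OF w])
    show "G \<omega> = I \<omega>" unfolding I_def good_I[OF g] Ih_gp G_def reward_path Tg_def ..
  qed
  have IN: "AE \<omega> in M. I \<omega> = (1-\<beta>) * Ns \<omega>"
  proof (rule AE_mp[OF AE_good], intro AE_I2 impI)
    fix \<omega> assume g: "good \<omega>"
    then have w: "\<omega> \<in> space M" unfolding good_def by simp
    interpret path \<beta> "\<lambda>i n. h i n \<omega>" s Bd by (rule pathw[OF w])
    show "I \<omega> = (1-\<beta>) * Ns \<omega>" unfolding I_def good_I[OF g] Ih_N Ns_def good_N[OF g] ..
  qed
  have Im[measurable]: "I \<in> borel_measurable M" by (rule AE_meas[OF Gm IG])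
  have Ii: "integrable M I" using integrable_cong_AE[OF Gm Im IG] Gi by simp
  have NG: "AE \<omega> in M. G \<omega> / (1-\<beta>) = Ns \<omega>" using IG IN
    by eventually_elim (use beta in auto)
  have Nm[measurable]: "Ns \<in> borel_measurable M" by (rule AE_meas[OF _ NG]) (use Gm in measurable)
  have Ni: "integrable M Ns" using integrable_cong_AE[OF _ Nm NG] Gi by simp
  have RleI: "AE \<omega> in M. reward \<beta> h T \<omega> \<le> I \<omega>" if T: "T \<in> alloc M F s" for T
  proof (rule AE_mp[OF AE_good], intro AE_I2 impI)
    fix \<omega> assume g: "good \<omega>"
    then have w: "\<omega> \<in> space M" unfolding good_def by simp
    interpret path \<beta> "\<lambda>i n. h i n \<omega>" s Bd by (rule pathw[OF w])
    show "reward \<beta> h T \<omega> \<le> I \<omega>" unfolding I_def good_I[OF g] reward_path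
      by (rule rew_le[OF alloc_path[OF T w]])
  qed
  have syncEq: "sync T \<omega> \<longleftrightarrow> reward \<beta> h T \<omega> = I \<omega>" if T: "T \<in> alloc M F s" and g: "good \<omega>" for T \<omega>
  proof -
    have w: "\<omega> \<in> space M" using g unfolding good_def by simp
    interpret path \<beta> "\<lambda>i n. h i n \<omega>" s Bd by (rule pathw[OF w])
    have P: "ispath s (\<lambda>t. T t \<omega>)" by (rule alloc_path[OF T w])
    have I: "I \<omega> = (LBINT m:{0..}. 1 - epow \<beta> (Kt \<beta> (\<lambda>i n. h i n \<omega>) s m))" unfolding I_def good_I[OF g] ..
    show ?thesis unfolding sync_def good_sync[OF g T] reward_path I
    proof
      assume "\<forall>t. \<forall>m>0. Pc \<beta> (\<lambda>i n. h i n \<omega>) (\<lambda>t. T t \<omega>) m t = Qc \<beta> (\<lambda>i n. h i n \<omega>) s m t"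
      then show "rew \<beta> (\<lambda>i n. h i n \<omega>) (\<lambda>t. T t \<omega>) = (LBINT m:{0..}. 1 - epow \<beta> (Kt \<beta> (\<lambda>i n. h i n \<omega>) s m))"
        by (rule rew_sync[OF P])
    next
      assume E: "rew \<beta> (\<lambda>i n. h i n \<omega>) (\<lambda>t. T t \<omega>) = (LBINT m:{0..}. 1 - epow \<beta> (Kt \<beta> (\<lambda>i n. h i n \<omega>) s m))"
      show "\<forall>t. \<forall>m>0. Pc \<beta> (\<lambda>i n. h i n \<omega>) (\<lambda>t. T t \<omega>) m t = Qc \<beta> (\<lambda>i n. h i n \<omega>) s m t"
      proof (intro allI impI, rule ccontr)
        fix t and m :: real assume m: "0 < m" and ne: "Pc \<beta> (\<lambda>i n. h i n \<omega>) (\<lambda>t. T t \<omega>) m t \<noteq> Qc \<beta> (\<lambda>i n. h i n \<omega>) s m t"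
        then have "Pc \<beta> (\<lambda>i n. h i n \<omega>) (\<lambda>t. T t \<omega>) m t < Qc \<beta> (\<lambda>i n. h i n \<omega>) s m t"
          using P_le_Q[OF P, of m t] by simp
        from rew_lt[OF P m this] E show False by simp
      qed
    qed
  qed
  have part1: "is_ess_sup M {real_cond_exp M (F s) (reward \<beta> h T) | T. T \<in> alloc M F s} (real_cond_exp M (F s) I)"
    unfolding is_ess_sup_def
  proof (intro conjI ballI allI impI)
    show "real_cond_exp M (F s) I \<in> borel_measurable M" by (rule borel_measurable_cond_exp2)
    fix X assume "X \<in> {real_cond_exp M (F s) (reward \<beta> h T) | T. T \<in> alloc M F s}"
    then obtain T where T: "T \<in> alloc M F s" and X: "X = real_cond_exp M (F s) (reward \<beta> h T)" by blast
    show "AE \<omega> in M. X \<omega> \<le> real_cond_exp M (F s) I \<omega>"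
      unfolding X by (rule S.real_cond_exp_mono[OF RleI[OF T] reward_int[OF T] Ii])
  next
    fix Z assume Zm: "Z \<in> borel_measurable M"
      and H: "\<forall>X\<in>{real_cond_exp M (F s) (reward \<beta> h T) | T. T \<in> alloc M F s}. AE \<omega> in M. X \<omega> \<le> Z \<omega>"
    have "real_cond_exp M (F s) G \<in> {real_cond_exp M (F s) (reward \<beta> h T) | T. T \<in> alloc M F s}"
      unfolding G_def using GT by blast
    then have A1: "AE \<omega> in M. real_cond_exp M (F s) G \<omega> \<le> Z \<omega>" using H by blast
    have A2: "AE \<omega> in M. real_cond_exp M (F s) G \<omega> = real_cond_exp M (F s) I \<omega>"
      by (rule S.real_cond_exp_cong[OF IG Gm Im])
    show "AE \<omega> in M. real_cond_exp M (F s) I \<omega> \<le> Z \<omega>" using A1 A2 by eventually_elim simp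
  qed
  have part2: "AE \<omega> in M. real_cond_exp M (F s) I \<omega> = (1 - \<beta>) * real_cond_exp M (F s) Ns \<omega>"
  proof -
    have A1: "AE \<omega> in M. real_cond_exp M (F s) I \<omega> = real_cond_exp M (F s) (\<lambda>\<omega>. (1-\<beta>) * Ns \<omega>) \<omega>"
      by (rule S.real_cond_exp_cong[OF IN Im]) measurable
    have A2: "AE \<omega> in M. real_cond_exp M (F s) (\<lambda>\<omega>. (1-\<beta>) * Ns \<omega>) \<omega> = (1-\<beta>) * real_cond_exp M (F s) Ns \<omega>"
      by (rule S.real_cond_exp_cmult[OF Ni])
    show ?thesis using A1 A2 by eventually_elim simp
  qed
  have part3: "(AE \<omega> in M. real_cond_exp M (F s) (reward \<beta> h T) \<omega> = real_cond_exp M (F s) I \<omega>)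
      \<longleftrightarrow> (AE \<omega> in M. sync T \<omega>)" if T: "T \<in> alloc M F s" for T
  proof
    assume A: "AE \<omega> in M. sync T \<omega>"
    have "AE \<omega> in M. reward \<beta> h T \<omega> = I \<omega>" using A AE_good
      by eventually_elim (use syncEq[OF T] in blast)
    then show "AE \<omega> in M. real_cond_exp M (F s) (reward \<beta> h T) \<omega> = real_cond_exp M (F s) I \<omega>"
      by (rule S.real_cond_exp_cong[OF _ reward_meas[OF T] Im])
  next
    assume A: "AE \<omega> in M. real_cond_exp M (F s) (reward \<beta> h T) \<omega> = real_cond_exp M (F s) I \<omega>"
    have Ri: "integrable M (reward \<beta> h T)" by (rule reward_int[OF T])
    have "integral\<^sup>L M (reward \<beta> h T) = integral\<^sup>L M I"
    proof -
      have "integral\<^sup>L M (reward \<beta> h T) = integral\<^sup>L M (real_cond_exp M (F s) (reward \<beta> h T))"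
        by (rule S.real_cond_exp_int(2)[OF Ri, symmetric])
      also have "\<dots> = integral\<^sup>L M (real_cond_exp M (F s) I)"
        by (rule integral_cong_AE[OF borel_measurable_cond_exp2 borel_measurable_cond_exp2 A])
      also have "\<dots> = integral\<^sup>L M I" by (rule S.real_cond_exp_int(2)[OF Ii])
      finally show ?thesis .
    qed
    then have "integral\<^sup>L M (\<lambda>\<omega>. I \<omega> - reward \<beta> h T \<omega>) = 0"
      using Ri Ii by simp
    moreover have "AE \<omega> in M. 0 \<le> I \<omega> - reward \<beta> h T \<omega>" using RleI[OF T] by eventually_elim simp
    ultimately have "AE \<omega> in M. I \<omega> - reward \<beta> h T \<omega> = 0"
      using integral_nonneg_eq_0_iff_AE[OF Bochner_Integration.integrable_diff[OF Ii Ri]] by simp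
    then show "AE \<omega> in M. sync T \<omega>" using AE_good
      by eventually_elim (use syncEq[OF T] in simp)
  qed
  show ?thesis using part1 part2 part3 unfolding I_def Ns_def sync_def by blast
qed

end

theorem theorem7p2:
  fixes M :: "'a measure"
    and F :: "('i::finite \<Rightarrow> nat) \<Rightarrow> 'a measure"
    and \<beta> :: real
    and h :: "'i \<Rightarrow> nat \<Rightarrow> 'a \<Rightarrow> real"
    and V :: "'i \<Rightarrow> nat \<Rightarrow> real \<Rightarrow> 'a \<Rightarrow> real"
    and s :: "'i \<Rightarrow> nat"
  assumes prob: "prob_space M"
    and compl: "complete_measure M"
    and beta: "0 < \<beta>" "\<beta> < 1"
    and subalg: "\<And>r. subalgebra M (F r)"
    and F1: "\<And>r q. r \<le> q \<Longrightarrow> sets (F r) \<subseteq> sets (F q)"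
    and F2: "null_sets M \<subseteq> sets (F (\<lambda>_. 0))"
    and h_pos: "\<And>i t \<omega>. 1 \<le> t \<Longrightarrow> \<omega> \<in> space M \<Longrightarrow> 0 < h i t \<omega>"
    and h_decr: "\<And>i t \<omega>. 1 \<le> t \<Longrightarrow> \<omega> \<in> space M \<Longrightarrow> h i (Suc t) \<omega> \<le> h i t \<omega>"
    and h_bdd: "\<exists>B. \<forall>i t. \<forall>\<omega>\<in>space M. 1 \<le> t \<longrightarrow> h i t \<omega> \<le> B"
    and h_pred: "\<And>i t. 1 \<le> t \<Longrightarrow> h i t \<in> borel_measurable (F (tvec (t - 1) i))"
    and V_ess: "\<And>i t m. 0 \<le> m \<Longrightarrow>
       is_ess_sup M {real_cond_exp M (F (tvec t i)) (payoff \<beta> h i t m \<tau>) | \<tau>. \<tau> \<in> stop_times M F i t}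
         (V i t m)"
    and V_cont: "\<And>i t \<omega>. \<omega> \<in> space M \<Longrightarrow> continuous_on {0..} (\<lambda>m. V i t m \<omega>)"
  shows "is_ess_sup M {real_cond_exp M (F s) (reward \<beta> h T) | T. T \<in> alloc M F s}
           (real_cond_exp M (F s) (\<lambda>\<omega>. LBINT m:{0..}. 1 - epow \<beta> (tau_tot V m s \<omega>)))
       \<and> (AE \<omega> in M. real_cond_exp M (F s) (\<lambda>\<omega>. LBINT m:{0..}. 1 - epow \<beta> (tau_tot V m s \<omega>)) \<omega>
              = (1 - \<beta>) * real_cond_exp M (F s) (\<lambda>\<omega>. \<Sum>t. \<beta> ^ t * N_idx V t s \<omega>) \<omega>)
       \<and> (\<forall>T\<in>alloc M F s.
            (AE \<omega> in M. real_cond_exp M (F s) (reward \<beta> h T) \<omega>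
                 = real_cond_exp M (F s) (\<lambda>\<omega>. LBINT m:{0..}. 1 - epow \<beta> (tau_tot V m s \<omega>)) \<omega>)
            \<longleftrightarrow> (AE \<omega> in M. \<forall>t. \<forall>m>0.
                  (\<Sum>i\<in>UNIV. min (enat (T t \<omega> i - s i)) (sigma_idx V i (s i) m \<omega> - enat (s i)))
                  = min (enat t) (tau_tot V m s \<omega>)))"
  proof -
  interpret stoch M F \<beta> h V
    by (rule stoch.intro[OF prob compl beta(1) beta(2) subalg F1 h_pos h_decr h_bdd h_pred V_ess V_cont])
  show ?thesis by (rule main)
qed

end
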